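(* For all $n\in\mathbb N$ and $0<\varepsilon<\frac12$ there exists $C=C(n)>0$ such that for $j=1,\dots,n$ and $i=1,2$, $$\|b_{j,i}^{\varepsilon,n}\|_\varepsilon\le\frac{C^j}{\sqrt{\lambda\log\frac1\varepsilon}},\qquad \|(-\mathcal L_0)^{1/2}b_{j,i}^{\varepsilon,n}\|_\varepsilon\le C^j.$$
   Context: Fix $\hat\lambda,\nu>0$ and $\lambda>0$. $\rho\in\mathcal S(\mathbb R^2)$ radially symmetric, $\int\rho=1$, Fourier transform supported in the unit ball; $V=\rho*\rho$, $\hat V_\varepsilon(p)=\hat V(\varepsilon p)$. For $n\ge1$, $\Gamma_n^\varepsilon$ is the Hilbert space of symmetric functions on $(\mathbb R^2)^n$ with $\langle\hat\psi,\hat\phi\rangle_\varepsilon=n!\int\prod_i\frac{\hat V_\varepsilon(p_i)}{|p_i|^2}\overline{\hat\psi}\hat\phi\,dp_{1:n}$. $a\times b=a_1b_2-a_2b_1$; $(-\mathcal L_0\hat\psi)(p_{1:n})=\frac{\nu^2}2|\sum_ip_i|^2\hat\psi$; $(\mathcal A_+^\varepsilon\hat\psi)(p_{1:n+1})=-\frac1{n+1}\frac{\hat\lambda}{\sqrt{\log(1/\varepsilon)}}\sum_{i=1}^{n+1}(p_i\times\sum_kp_k)\hat\psi(p_{1:n+1\setminus i})$. $\mathcal V^\varepsilon=(\mathcal V_1^\varepsilon,\mathcal V_2^\varepsilon)\in(\Gamma_1^\varepsilon)^2$ with $\hat{\mathcal V}_1^\varepsilon(p)=-\imath\frac{\hat\lambda}{\sqrt{\log(1/\varepsilon)}}p_2$,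 $\hat{\mathcal V}_2^\varepsilon(p)=\imath\frac{\hat\lambda}{\sqrt{\log(1/\varepsilon)}}p_1$. For $F:[0,\infty)\to\mathbb R$, $F(L^\varepsilon(\lambda-\mathcal L_0))$ multiplies $\hat\psi\in\Gamma_m^\varepsilon$ by $F(L^\varepsilon(\lambda+\frac{\nu^2}2|\sum_ip_i|^2))$, $L^\varepsilon(x)=\frac{\pi\hat\lambda^2}{|\log\varepsilon^2|}\log(1+\frac1{\varepsilon^2x})$. $G_1\equiv0$, $G_k(x)=\int_0^x(1+\frac4{\nu^4}G_{k-1}(y))^{-1}dy$. Componentwise, $b_1^{\varepsilon,n}=[\lambda-\mathcal L_0(1+\frac4{\nu^4}G_n(L^\varepsilon(\lambda-\mathcal L_0)))]^{-1}\mathcal V^\varepsilon$ and $b_j^{\varepsilon,n}=[\lambda-\mathcal L_0(1+\frac4{\nu^4}G_{n+1-j}(L^\varepsilon(\lambda-\mathcal L_0)))]^{-1}\mathcal A_+^\varepsilon b_{j-1}^{\varepsilon,n}$, $2\le j\le n$; $b_{j,i}^{\varepsilon,n}$ is the $i$-th component of $b_j^{\varepsilon,n}$. *)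

theory Defs
  imports "HOL-Analysis.Analysis"
begin

definition pdiff :: "2 \<Rightarrow> (real^2 \<Rightarrow> real) \<Rightarrow> real^2 \<Rightarrow> real" where
  "pdiff k f x = frechet_derivative f (at x) (axis k 1)"

fun iter_pdiff :: "2 list \<Rightarrow> (real^2 \<Rightarrow> real) \<Rightarrow> real^2 \<Rightarrow> real" where
  "iter_pdiff [] f = f"
| "iter_pdiff (k # ks) f = pdiff k (iter_pdiff ks f)"

definition schwartz :: "(real^2 \<Rightarrow> real) \<Rightarrow> bool" where
  "schwartz f \<longleftrightarrow>
     (\<forall>ks x. iter_pdiff ks f differentiable (at x)) \<and>
     (\<forall>ks (m::nat). bounded (range (\<lambda>x. (1 + norm x) ^ m * iter_pdiff ks f x)))"

definition radial :: "(real^2 \<Rightarrow> real) \<Rightarrow> bool" where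
  "radial f \<longleftrightarrow> (\<forall>x y. norm x = norm y \<longrightarrow> f x = f y)"

definition ft :: "(real^2 \<Rightarrow> real) \<Rightarrow> real^2 \<Rightarrow> complex" where
  "ft f p = (LINT x|lborel. complex_of_real (f x) * cis (- (p \<bullet> x)))"

definition conv :: "(real^2 \<Rightarrow> real) \<Rightarrow> (real^2 \<Rightarrow> real) \<Rightarrow> real^2 \<Rightarrow> real" where
  "conv f g x = (LINT y|lborel. f y * g (x - y))"

definition Vhat :: "(real^2 \<Rightarrow> real) \<Rightarrow> real \<Rightarrow> real^2 \<Rightarrow> complex" where
  "Vhat rho eps p = ft (conv rho rho) (eps *\<^sub>R p)"

text \<open>An element of \<open>\<Gamma>_n\<close> is represented by its Fourier transform, a function of
  \<open>p :: nat \<Rightarrow> real^2\<close> of which only \<open>p 0, \<dots>, p (n-1)\<close> matter.\<close>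

definition sumP :: "nat \<Rightarrow> (nat \<Rightarrow> real^2) \<Rightarrow> real^2" where
  "sumP n p = (\<Sum>i<n. p i)"

definition gnorm_sq :: "(real^2 \<Rightarrow> real) \<Rightarrow> real \<Rightarrow> nat \<Rightarrow> ((nat \<Rightarrow> real^2) \<Rightarrow> complex) \<Rightarrow> ennreal" where
  "gnorm_sq rho eps n psi =
     ennreal (fact n) *
     (\<integral>\<^sup>+ p. ennreal (\<Prod>i<n. Re (Vhat rho eps (p i)) / (norm (p i))\<^sup>2) * ennreal ((cmod (psi p))\<^sup>2)
        \<partial>(PiM {..<n} (\<lambda>_. (lborel :: (real^2) measure))))"

definition cross :: "real^2 \<Rightarrow> real^2 \<Rightarrow> real" where
  "cross a b = a$1 * b$2 - a$2 * b$1"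

definition drop_idx :: "nat \<Rightarrow> (nat \<Rightarrow> real^2) \<Rightarrow> nat \<Rightarrow> real^2" where
  "drop_idx i p k = (if k < i then p k else p (Suc k))"

definition Aplus :: "real \<Rightarrow> real \<Rightarrow> nat \<Rightarrow> ((nat \<Rightarrow> real^2) \<Rightarrow> complex) \<Rightarrow> (nat \<Rightarrow> real^2) \<Rightarrow> complex" where
  "Aplus lhat eps n psi p =
     - (1 / of_nat (n + 1)) * complex_of_real (lhat / sqrt (ln (1 / eps))) *
       (\<Sum>i<n+1. complex_of_real (cross (p i) (sumP (n + 1) p)) * psi (drop_idx i p))"

definition Vvec :: "real \<Rightarrow> real \<Rightarrow> nat \<Rightarrow> (nat \<Rightarrow> real^2) \<Rightarrow> complex" where
  "Vvec lhat eps c p =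
     (if c = 1 then - \<i> * complex_of_real (lhat / sqrt (ln (1 / eps)) * (p 0)$2)
      else \<i> * complex_of_real (lhat / sqrt (ln (1 / eps)) * (p 0)$1))"

definition Leps :: "real \<Rightarrow> real \<Rightarrow> real \<Rightarrow> real" where
  "Leps lhat eps x = pi * lhat\<^sup>2 / \<bar>ln (eps\<^sup>2)\<bar> * ln (1 + 1 / (eps\<^sup>2 * x))"

text \<open>\<open>G_1 = 0\<close>, \<open>G_k(x) = \<integral>_0^x (1 + 4/\<nu>^4 G_{k-1}(y))^{-1} dy\<close>; \<open>G_0\<close> is unused.\<close>
fun Gk :: "real \<Rightarrow> nat \<Rightarrow> real \<Rightarrow> real" where
  "Gk nu 0 x = 0"
| "Gk nu (Suc 0) x = 0"
| "Gk nu (Suc (Suc k)) x = integral {0..x} (\<lambda>y. inverse (1 + 4 / nu ^ 4 * Gk nu (Suc k) y))"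

text \<open>\<open>[\<lambda> - \<L>_0 (1 + 4/\<nu>^4 G_m(L^\<epsilon>(\<lambda> - \<L>_0)))]^{-1}\<close> on \<open>\<Gamma>_k\<close> (Fourier multiplier).\<close>
definition Res :: "real \<Rightarrow> real \<Rightarrow> real \<Rightarrow> real \<Rightarrow> nat \<Rightarrow> nat \<Rightarrow> ((nat \<Rightarrow> real^2) \<Rightarrow> complex) \<Rightarrow> (nat \<Rightarrow> real^2) \<Rightarrow> complex" where
  "Res lhat nu lam eps m k psi p =
     (let q = nu\<^sup>2 / 2 * (norm (sumP k p))\<^sup>2 in
      complex_of_real (inverse (lam + q * (1 + 4 / nu ^ 4 * Gk nu m (Leps lhat eps (lam + q))))) * psi p)"

text \<open>\<open>b_{j,c}^{\<epsilon>,n}\<close> (an element of \<open>\<Gamma>_j\<close>), for \<open>j \<ge> 1\<close>; the value at \<open>j = 0\<close> is unused.\<close>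
fun bfun :: "real \<Rightarrow> real \<Rightarrow> real \<Rightarrow> real \<Rightarrow> nat \<Rightarrow> nat \<Rightarrow> nat \<Rightarrow> (nat \<Rightarrow> real^2) \<Rightarrow> complex" where
  "bfun lhat nu lam eps n 0 c = (\<lambda>_. 0)"
| "bfun lhat nu lam eps n (Suc 0) c = Res lhat nu lam eps n 1 (Vvec lhat eps c)"
| "bfun lhat nu lam eps n (Suc (Suc j)) c =
     Res lhat nu lam eps (n - Suc j) (Suc (Suc j)) (Aplus lhat eps (Suc j) (bfun lhat nu lam eps n (Suc j) c))"

definition sqrtL0 :: "real \<Rightarrow> nat \<Rightarrow> ((nat \<Rightarrow> real^2) \<Rightarrow> complex) \<Rightarrow> (nat \<Rightarrow> real^2) \<Rightarrow> complex" where
  "sqrtL0 nu k psi p = complex_of_real (sqrt (nu\<^sup>2 / 2) * norm (sumP k p)) * psi p"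

end

theory Submission
  imports Defs
begin

lemma exists_dyadic:
  fixes x :: real assumes "1 \<le> x"
  shows "\<exists>k::nat. 2^k \<le> x \<and> x < 2^Suc k"
proof -
  obtain K :: nat where K: "x < 2^K" using real_arch_pow[of 2 x] by auto
  have "\<forall>x::real. 1 \<le> x \<longrightarrow> x < 2^K \<longrightarrow> (\<exists>k::nat. 2^k \<le> x \<and> x < 2^Suc k)"
  proof (induction K)
    case 0 then show ?case by auto
  next
    case (Suc K)
    show ?case
    proof (intro allI impI)
      fix x :: real assume a: "1 \<le> x" "x < 2^Suc K"
      show "\<exists>k::nat. 2^k \<le> x \<and> x < 2^Suc k"
      proof (cases "x < 2^K")
        case True then show ?thesis using Suc.IH a by blast
      next
        case False then show ?thesis using a by (intro exI[of _ K]) auto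
      qed
    qed
  qed
  then show ?thesis using assms K by blast
qed

lemma ennreal_le_suminf: "(f::nat\<Rightarrow>ennreal) k \<le> suminf f"
  using sum_le_suminf[of f "{k}"] by (simp add: summableI)

lemma set_nn_const: "A \<in> sets M \<Longrightarrow> (\<integral>\<^sup>+x\<in>A. c \<partial>M) = c * emeasure M A"
  using nn_integral_cmult_indicator[of A M c] by (simp add: mult.commute)

lemma pred_ball[measurable]: "Measurable.pred borel (\<lambda>x::'a::metric_space. x \<in> ball c r)"
  using borel_open[OF open_ball, of c r] unfolding pred_def by (simp add: ball_def)

lemma pred_cball[measurable]: "Measurable.pred borel (\<lambda>x::'a::metric_space. x \<in> cball c r)"
  using borel_closed[OF closed_cball, of c r] unfolding pred_def by (simp add: cball_def)

lemma pow4: "((2::real)^Suc k)^2 = 4 * 4^k"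
proof -
  have "((2::real)^Suc k)^2 = (2^2)^Suc k" by (simp only: power_mult[symmetric] mult.commute)
  then show ?thesis by simp
qed

lemma pow4': "((2::real)^k)^2 = 4^k"
proof -
  have "((2::real)^k)^2 = (2^2)^k" by (simp only: power_mult[symmetric] mult.commute)
  then show ?thesis by simp
qed

definition UB :: real where "UB = unit_ball_vol (real DIM(real^2))"

lemma UB_pos: "UB > 0" unfolding UB_def by simp

lemma emeasure_ball2: "r \<ge> 0 \<Longrightarrow> emeasure lborel (ball (0::real^2) r) = ennreal (UB * r^2)"
  unfolding UB_def by (simp add: emeasure_ball)

lemma shell_bound:
  fixes f :: "real^2 \<Rightarrow> real" and c :: "nat \<Rightarrow> real"
  assumes c0: "c0 \<ge> 0" and ck: "\<And>k. c k \<ge> 0" and sm: "summable (\<lambda>k. c k * 4^k)"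
  and b0: "\<And>z. norm z < 1 \<Longrightarrow> f z \<le> c0"
  and bk: "\<And>k z. 2^k \<le> norm z \<Longrightarrow> norm z < 2^Suc k \<Longrightarrow> f z \<le> c k"
  shows "(\<integral>\<^sup>+z. ennreal (f z) \<partial>lborel) \<le> ennreal (UB * c0 + UB * 4 * (\<Sum>k. c k * 4^k))"
proof -
  define g where "g z = ennreal c0 * indicator (ball 0 1) z
      + (\<Sum>k. ennreal (c k) * indicator (ball 0 (2^Suc k)) z)" for z :: "real^2"
  have fg: "ennreal (f z) \<le> g z" for z
  proof (cases "norm z < 1")
    case True
    then have "ennreal (f z) \<le> ennreal c0 * indicator (ball 0 1) z"
      using b0 by (simp add: ennreal_leI)
    then show ?thesis unfolding g_def by (rule order_trans) simp
  next
    case False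
    then obtain k where k: "2^k \<le> norm z" "norm z < 2^Suc k" using exists_dyadic[of "norm z"] by auto
    then have "ennreal (f z) \<le> ennreal (c k) * indicator (ball 0 (2^Suc k)) z"
      using bk[OF k] by (simp add: ennreal_leI)
    also have "\<dots> \<le> (\<Sum>k. ennreal (c k) * indicator (ball 0 (2^Suc k)) z)"
      by (rule ennreal_le_suminf)
    also have "\<dots> \<le> g z" unfolding g_def by simp
    finally show ?thesis .
  qed
  have "(\<integral>\<^sup>+z. ennreal (f z) \<partial>lborel) \<le> (\<integral>\<^sup>+z. g z \<partial>lborel)"
    by (rule nn_integral_mono) (use fg in auto)
  also have "\<dots> = (\<integral>\<^sup>+z. ennreal c0 * indicator (ball (0::real^2) 1) z \<partial>lborel)
      + (\<integral>\<^sup>+z. (\<Sum>k. ennreal (c k) * indicator (ball (0::real^2) (2^Suc k)) z) \<partial>lborel)"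
    unfolding g_def by (rule nn_integral_add) measurable
  also have "\<dots> = ennreal c0 * emeasure lborel (ball (0::real^2) 1)
     + (\<Sum>k. (\<integral>\<^sup>+z. ennreal (c k) * indicator (ball (0::real^2) (2^Suc k)) z \<partial>lborel))"
    by (subst nn_integral_suminf, measurable) (simp add: nn_integral_cmult_indicator)
  also have "\<dots> = ennreal c0 * emeasure lborel (ball (0::real^2) 1)
     + (\<Sum>k. ennreal (c k) * emeasure lborel (ball (0::real^2) (2^Suc k)))"
    by (simp only: nn_integral_cmult_indicator sets_lborel borel_open open_ball)
  also have "\<dots> = ennreal (UB * c0) + (\<Sum>k. ennreal (UB * 4 * (c k * 4^k)))"
    using c0 ck UB_pos by (simp add: emeasure_ball2 pow4 pow4' ennreal_mult'[symmetric] algebra_simps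
       flip: ennreal_mult)
  also have "\<dots> = ennreal (UB * c0) + ennreal (UB * 4 * (\<Sum>k. c k * 4^k))"
    using c0 ck UB_pos sm
    by (subst suminf_ennreal2) (auto simp: suminf_mult intro!: summable_mult)
  also have "\<dots> = ennreal (UB * c0 + UB * 4 * (\<Sum>k. c k * 4^k))"
    using c0 ck UB_pos suminf_nonneg[OF sm] by (simp add: ennreal_plus)
  finally show ?thesis .
qed

lemma nn_integral_translate:
  fixes f :: "'a::euclidean_space \<Rightarrow> ennreal"
  assumes [measurable]: "f \<in> borel_measurable borel"
  shows "(\<integral>\<^sup>+y. f (y + s) \<partial>lborel) = (\<integral>\<^sup>+y. f y \<partial>lborel)"
proof -
  have "(\<integral>\<^sup>+y. f y \<partial>lborel) = (\<integral>\<^sup>+y. f y \<partial>(distr lborel borel ((+) s)))"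
    by (simp add: lborel_distr_plus)
  also have "\<dots> = (\<integral>\<^sup>+y. f (s + y) \<partial>lborel)"
    by (subst nn_integral_distr) auto
  finally show ?thesis by (simp add: add.commute)
qed

lemma emeasure_cball2: "r \<ge> 0 \<Longrightarrow> emeasure lborel (cball (c::real^2) r) = ennreal (UB * r^2)"
  unfolding UB_def by (simp add: emeasure_cball)

definition D2 :: "real \<Rightarrow> real \<Rightarrow> real" where
  "D2 lam a = UB * (1/lam^2) + UB * 4 * (\<Sum>k. 1/a^2 * (1/4)^k)"

lemma intB:
  fixes s :: "real^2" assumes lam: "lam > 0" and a: "a > 0"
  shows "(\<integral>\<^sup>+y. ennreal (1 / (lam + a * (norm (y + s))^2)^2) \<partial>lborel) \<le> ennreal (D2 lam a)"
proof -
  have "(\<integral>\<^sup>+y. ennreal (1 / (lam + a * (norm (y + s))^2)^2) \<partial>lborel)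
     = (\<integral>\<^sup>+y. ennreal (1 / (lam + a * (norm (y::real^2))^2)^2) \<partial>lborel)"
  proof -
    have m: "(\<lambda>y::real^2. ennreal (1 / (lam + a * (norm y)^2)^2)) \<in> borel_measurable borel" by measurable
    show ?thesis using nn_integral_translate[OF m, of s] by simp
  qed
  also have "\<dots> \<le> ennreal (UB * (1/lam^2) + UB * 4 * (\<Sum>k. (1/(a^2 * 16^k)) * 4^k))"
  proof (rule shell_bound)
    show "0 \<le> 1/lam^2" by simp
    have "0 \<le> a * (norm z)^2" for z :: "real^2" using a by simp
    show "0 \<le> 1/(a^2 * 16^k)" for k by simp
    have e: "(1/(a^2 * 16^k)) * 4^k = 1/a^2 * (1/4)^k" for k :: nat
    proof -
      have "(16::real)^k = 4^k * 4^k" by (simp flip: power_mult_distrib)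
      then show ?thesis by (simp add: field_simps power_one_over)
    qed
    show "summable (\<lambda>k. (1/(a^2 * 16^k)) * 4^k)"
      unfolding e by (intro summable_mult summable_geometric) simp
    show "1 / (lam + a * (norm z)^2)^2 \<le> 1/lam^2" for z :: "real^2"
    proof -
      have "0 \<le> a * (norm z)^2" using a by simp
      then have "lam^2 \<le> (lam + a * (norm z)^2)^2" using lam by (intro power_mono) auto
      moreover have "0 < lam + a * (norm z)^2" using \<open>0 \<le> a * (norm z)^2\<close> lam by linarith
      ultimately show ?thesis using lam by (intro divide_left_mono) auto
    qed
    show "1 / (lam + a * (norm z)^2)^2 \<le> 1/(a^2 * 16^k)" if "2^k \<le> norm z" for k and z :: "real^2"
    proof -
      have "(4::real)^k \<le> (norm z)^2" using that pow4'[of k] power_mono[OF that, of 2] by simp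
      then have "a * 4^k \<le> lam + a * (norm z)^2" using a lam by (smt (verit) mult_left_mono)
      then have "(a * 4^k)^2 \<le> (lam + a * (norm z)^2)^2" by (rule power_mono) (use a in simp)
      moreover have "(a * 4^k)^2 = a^2 * 16^k"
      proof -
        have "((4::real)^k)^2 = (4^2)^k" by (simp only: power_mult[symmetric] mult.commute)
        then show ?thesis by (simp add: power_mult_distrib)
      qed
      moreover have "0 < lam + a * (norm z)^2" using a lam by (simp add: add_pos_nonneg)
      ultimately show ?thesis using a by (intro divide_left_mono) auto
    qed
  qed
  also have "\<dots> = ennreal (D2 lam a)"
  proof -
    have e: "(1/(a^2 * 16^k)) * 4^k = 1/a^2 * (1/4)^k" for k :: nat
    proof -
      have "(16::real)^k = 4^k * 4^k" by (simp flip: power_mult_distrib)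
      then show ?thesis by (simp add: field_simps power_one_over)
    qed
    show ?thesis unfolding D2_def e ..
  qed
  finally show ?thesis .
qed

definition D1 :: "real \<Rightarrow> real \<Rightarrow> real" where
  "D1 lam a = (UB/lam + 4*UB/a + UB/a)/ln 2 + 4*UB/(a*ln 2)"

lemma intA:
  fixes s :: "real^2" assumes lam: "lam > 0" and a: "a > 0" and R: "R \<ge> 2"
  shows "(\<integral>\<^sup>+y. ennreal (indicator (cball 0 R) y / (lam + a * (norm (y + s))^2)) \<partial>lborel)
     \<le> ennreal (D1 lam a * ln R)"
proof -
  obtain k :: nat where k: "2^k \<le> R" "R < 2^Suc k" using exists_dyadic[of R] R by auto
  define K where "K = Suc k"
  define g where "g z = indicator (cball s R) z / (lam + a * (norm z)^2)" for z :: "real^2"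
  have pos: "0 < lam + a * (norm z)^2" for z :: "real^2" using a lam by (simp add: add_pos_nonneg)
  have "(\<integral>\<^sup>+y. ennreal (indicator (cball 0 R) y / (lam + a * (norm (y + s))^2)) \<partial>lborel)
      = (\<integral>\<^sup>+y. ennreal (g (y + s)) \<partial>lborel)"
    unfolding g_def by (intro nn_integral_cong) (simp add: indicator_def dist_norm)
  also have "\<dots> = (\<integral>\<^sup>+(z::real^2). ennreal (g z) \<partial>lborel)"
  proof -
    have m: "(\<lambda>z. ennreal (g z)) \<in> borel_measurable borel" unfolding g_def by measurable
    show ?thesis using nn_integral_translate[OF m, of s] by simp
  qed
  also have "\<dots> \<le> (\<integral>\<^sup>+(z::real^2). ennreal (if norm z < 2^K then 1 / (lam + a * (norm z)^2) else 0)
         + ennreal (indicator (cball s R) z * (1 / (a * 4^K))) \<partial>lborel)"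
  proof (intro nn_integral_mono)
    fix z :: "real^2"
    have "g z \<le> (if norm z < 2^K then 1 / (lam + a * (norm z)^2) else 0)
         + indicator (cball s R) z * (1 / (a * 4^K))"
    proof (cases "norm z < 2^K")
      case True
      have "g z \<le> 1 / (lam + a * (norm z)^2)"
        unfolding g_def using pos[of z] by (intro divide_right_mono) (auto simp: indicator_def)
      moreover have "0 \<le> indicator (cball s R) z * (1 / (a * 4^K))" using a by simp
      ultimately show ?thesis using True by simp
    next
      case False
      then have "(4::real)^K \<le> (norm z)^2" using pow4'[of K] power_mono[of "2^K" "norm z" 2] by simp
      then have "a * 4^K \<le> lam + a * (norm z)^2" using a lam by (smt (verit) mult_left_mono)
      then have "1 / (lam + a * (norm z)^2) \<le> 1 / (a * 4^K)" using a pos[of z] by (intro divide_left_mono) auto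
      then have "g z \<le> indicator (cball s R) z * (1 / (a * 4^K))"
        unfolding g_def by (auto simp: indicator_def)
      then show ?thesis using False by simp
    qed
    moreover have "0 \<le> indicator (cball s R) z * (1 / (a * 4^K))" using a by simp
    moreover have "0 \<le> (if norm z < 2^K then 1 / (lam + a * (norm z)^2) else 0)" using pos[of z] by simp
    ultimately show "ennreal (g z) \<le> ennreal (if norm z < 2^K then 1 / (lam + a * (norm z)^2) else 0)
         + ennreal (indicator (cball s R) z * (1 / (a * 4^K)))"
      by (simp add: ennreal_plus[symmetric] ennreal_leI del: ennreal_plus)
  qed
  also have "\<dots> = (\<integral>\<^sup>+(z::real^2). ennreal (if norm z < 2^K then 1 / (lam + a * (norm z)^2) else 0) \<partial>lborel)
         + (\<integral>\<^sup>+(z::real^2). ennreal (indicator (cball s R) z * (1 / (a * 4^K))) \<partial>lborel)"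
    by (rule nn_integral_add) measurable
  also have "(\<integral>\<^sup>+(z::real^2). ennreal (indicator (cball s R) z * (1 / (a * 4^K))) \<partial>lborel)
      = ennreal (1 / (a * 4^K)) * emeasure lborel (cball s R)"
    using a by (subst nn_integral_cmult_indicator[symmetric]) (auto simp: indicator_def intro!: nn_integral_cong)
  also have "\<dots> = ennreal (UB * R^2 / (a * 4^K))"
    using R a UB_pos by (simp add: emeasure_cball2 ennreal_mult'[symmetric])
  also have "(\<integral>\<^sup>+(z::real^2). ennreal (if norm z < 2^K then 1 / (lam + a * (norm z)^2) else 0) \<partial>lborel)
      \<le> ennreal (UB * (1/lam) + UB * 4 * (\<Sum>j. (if j < K then 1/(a*4^j) else 0) * 4^j))"
  proof (rule shell_bound)
    show "0 \<le> 1/lam" using lam by simp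
    show "0 \<le> (if j < K then 1/(a*4^j) else 0)" for j using a by simp
    show "summable (\<lambda>j. (if j < K then 1/(a*4^j) else 0) * (4::real)^j)"
      by (rule summable_finite[of "{..<K}"]) auto
    show "(if norm z < 2^K then 1 / (lam + a * (norm z)^2) else 0) \<le> 1/lam" for z :: "real^2"
      using pos[of z] a lam by (auto intro!: divide_left_mono)
    show "(if norm z < 2^K then 1 / (lam + a * (norm z)^2) else 0) \<le> (if j < K then 1/(a*4^j) else 0)"
      if "2^j \<le> norm z" for j and z :: "real^2"
    proof (cases "j < K")
      case True
      have "(4::real)^j \<le> (norm z)^2" using that pow4'[of j] power_mono[OF that, of 2] by simp
      then have "a * 4^j \<le> lam + a * (norm z)^2" using a lam by (smt (verit) mult_left_mono)
      then have "1 / (lam + a * (norm z)^2) \<le> 1 / (a * 4^j)" using a pos[of z] by (intro divide_left_mono) auto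
      then show ?thesis using True pos[of z] a by auto
    next
      case False
      then have "(2::real)^K \<le> 2^j" by simp
      then have "\<not> norm z < 2^K" using that by linarith
      then show ?thesis using False by simp
    qed
  qed
  also have "(\<Sum>j. (if j < K then 1/(a*4^j) else 0) * (4::real)^j) = real K / a"
  proof -
    have "(\<Sum>j. (if j < K then 1/(a*4^j) else 0) * (4::real)^j) = (\<Sum>j<K. (if j < K then 1/(a*4^j) else 0) * (4::real)^j)"
      by (rule suminf_finite) auto
    also have "\<dots> = (\<Sum>j<K. 1/a)" by (intro sum.cong) auto
    finally show ?thesis by simp
  qed
  finally have I: "(\<integral>\<^sup>+y. ennreal (indicator (cball 0 R) y / (lam + a * (norm (y + s))^2)) \<partial>lborel)
     \<le> ennreal (UB * (1/lam) + UB * 4 * (real K / a)) + ennreal (UB * R^2 / (a * 4^K))"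
    by (simp add: add_mono)
  have R2: "R^2 \<le> 4^K" using k(2) pow4'[of K] power_mono[of R "2^K" 2] R unfolding K_def by simp
  have "UB * R^2 / (a * 4^K) \<le> UB / a"
  proof -
    have "UB * R^2 / (a * 4^K) = (UB / a) * (R^2 / 4^K)" by simp
    also have "\<dots> \<le> (UB / a) * 1" using R2 UB_pos a by (intro mult_left_mono) auto
    finally show ?thesis by simp
  qed
  have kl: "real k \<le> ln R / ln 2"
  proof -
    have "ln (2^k) \<le> ln R" using k(1) R by (subst ln_le_cancel_iff) auto
    then have "real k * ln 2 \<le> ln R" by (simp add: ln_realpow)
    then show ?thesis by (simp add: field_simps)
  qed
  have lnR: "ln 2 \<le> ln R" using R by simp
  have ln2: "0 < ln (2::real)" by simp
  have "UB * (1/lam) + UB * 4 * (real K / a) + UB * R^2 / (a * 4^K)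
      \<le> (UB/lam + 4*UB/a + UB/a) + 4*UB/a * real k"
  proof -
    have "UB * 4 * (real K / a) = 4 * (UB/a) * (1 + real k)" unfolding K_def by simp
    also have "\<dots> = 4*UB/a + 4*UB/a * real k" by (simp only: distrib_left mult_1_right times_divide_eq_right)
    finally have "UB * 4 * (real K / a) = 4*UB/a + 4*UB/a * real k" .
    moreover have "UB * (1/lam) = UB/lam" by simp
    ultimately show ?thesis using \<open>UB * R^2 / (a * 4^K) \<le> UB / a\<close> by linarith
  qed
  also have "\<dots> \<le> (UB/lam + 4*UB/a + UB/a)/ln 2 * ln R + 4*UB/a * (ln R / ln 2)"
  proof (rule add_mono)
    have "(UB/lam + 4*UB/a + UB/a) = (UB/lam + 4*UB/a + UB/a)/ln 2 * ln 2" using ln2 by simp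
    also have "\<dots> \<le> (UB/lam + 4*UB/a + UB/a)/ln 2 * ln R"
      using lnR ln2 UB_pos lam a by (intro mult_left_mono) auto
    finally show "(UB/lam + 4*UB/a + UB/a) \<le> (UB/lam + 4*UB/a + UB/a)/ln 2 * ln R" .
    show "4*UB/a * real k \<le> 4*UB/a * (ln R / ln 2)" using kl UB_pos a by (intro mult_left_mono) auto
  qed
  also have "\<dots> = D1 lam a * ln R" unfolding D1_def by (simp add: field_simps)
  finally have "UB * (1/lam) + UB * 4 * (real K / a) + UB * R^2 / (a * 4^K) \<le> D1 lam a * ln R" .
  moreover have "ennreal (UB * (1/lam) + UB * 4 * (real K / a)) + ennreal (UB * R^2 / (a * 4^K))
      = ennreal (UB * (1/lam) + UB * 4 * (real K / a) + UB * R^2 / (a * 4^K))"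
    using UB_pos lam a by (subst ennreal_plus) auto
  ultimately have "ennreal (UB * (1/lam) + UB * 4 * (real K / a)) + ennreal (UB * R^2 / (a * 4^K))
      \<le> ennreal (D1 lam a * ln R)" by (simp add: ennreal_leI)
  with I show ?thesis by (rule order_trans)
qed

lemma integral_translate:
  fixes g :: "'a::euclidean_space \<Rightarrow> 'b::{banach, second_countable_topology}"
  assumes [measurable]: "g \<in> borel_measurable borel"
  shows "(LINT x|lborel. g (x + s)) = (LINT x|lborel. g x)"
proof -
  have "(LINT x|lborel. g x) = integral\<^sup>L (distr lborel borel ((+) s)) g"
    by (simp add: lborel_distr_plus)
  also have "\<dots> = (LINT x|lborel. g (s + x))"
    by (subst integral_distr) auto
  finally show ?thesis by (simp add: add.commute)
qed

lemma nn_integral_translate':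
  fixes f :: "'a::euclidean_space \<Rightarrow> ennreal"
  assumes [measurable]: "f \<in> borel_measurable borel"
  shows "(\<integral>\<^sup>+y. f (y + s) \<partial>lborel) = (\<integral>\<^sup>+y. f y \<partial>lborel)"
proof -
  have "(\<integral>\<^sup>+y. f y \<partial>lborel) = (\<integral>\<^sup>+y. f y \<partial>(distr lborel borel ((+) s)))"
    by (simp add: lborel_distr_plus)
  also have "\<dots> = (\<integral>\<^sup>+y. f (s + y) \<partial>lborel)"
    by (subst nn_integral_distr) auto
  finally show ?thesis by (simp add: add.commute)
qed

lemma cis_borel: "cis \<in> borel_measurable borel"
  by (rule borel_measurable_continuous_onI) (intro continuous_intros)

lemma borel_measurable_cis[measurable (raw)]:
  "g \<in> borel_measurable M \<Longrightarrow> (\<lambda>x. cis (g x)) \<in> borel_measurable M"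
  by (rule measurable_compose[OF _ cis_borel])

lemma conv_thm:
  fixes f :: "real^2 \<Rightarrow> real"
  assumes fm[measurable]: "f \<in> borel_measurable borel" and fi: "integrable lborel f"
  shows "ft (conv f f) q = ft f q * ft f q"
proof -
  define h where "h = (\<lambda>(x::real^2, y::real^2). complex_of_real (f y * f (x - y)) * cis (- (q \<bullet> x)))"
  have hm[measurable]: "h \<in> borel_measurable (lborel \<Otimes>\<^sub>M lborel)"
    unfolding h_def by measurable
  define F where "F = (\<integral>\<^sup>+x. ennreal (norm (f x)) \<partial>lborel)"
  have Ffin: "F < \<infinity>" unfolding F_def using fi by (simp add: integrable_iff_bounded)
  have tr: "(\<integral>\<^sup>+x. ennreal (norm (f (x - y))) \<partial>lborel) = F" for y :: "real^2"
    unfolding F_def using nn_integral_translate'[of "\<lambda>x. ennreal (norm (f x))" "-y"] by simp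
  have "(\<integral>\<^sup>+z. ennreal (norm (h z)) \<partial>(lborel \<Otimes>\<^sub>M lborel))
      = (\<integral>\<^sup>+y. (\<integral>\<^sup>+x. ennreal (norm (h (x, y))) \<partial>lborel) \<partial>lborel)"
    by (rule lborel_pair.nn_integral_snd[symmetric]) measurable
  also have "\<dots> = (\<integral>\<^sup>+y. ennreal (norm (f y)) * (\<integral>\<^sup>+x. ennreal (norm (f (x - y))) \<partial>lborel) \<partial>lborel)"
    unfolding h_def
    by (intro nn_integral_cong) (simp add: norm_mult abs_mult ennreal_mult nn_integral_cmult)
  also have "\<dots> = F * F" unfolding tr by (simp add: nn_integral_multc F_def)
  also have "\<dots> < \<infinity>" using Ffin by (simp add: ennreal_mult_less_top)
  finally have hi: "integrable (lborel \<Otimes>\<^sub>M lborel) h" by (intro integrableI_bounded hm)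
  have cm: "cis (a - b) = cis a * cis (-b)" for a b by (simp add: cis_mult)
  have inner: "(LINT x|lborel. h (x, y)) = complex_of_real (f y) * cis (- (q \<bullet> y)) * ft f q" for y
  proof -
    have "(LINT x|lborel. h (x, y)) = complex_of_real (f y) * (LINT x|lborel. complex_of_real (f (x - y)) * cis (- (q \<bullet> x)))"
      unfolding h_def by (simp add: mult.assoc)
    also have "(LINT x|lborel. complex_of_real (f (x - y)) * cis (- (q \<bullet> x)))
        = (LINT x|lborel. complex_of_real (f ((x + y) - y)) * cis (- (q \<bullet> (x + y))))"
      by (rule integral_translate[symmetric, where g="\<lambda>x. complex_of_real (f (x - y)) * cis (- (q \<bullet> x))"]) measurable
    also have "\<dots> = (LINT x|lborel. cis (- (q \<bullet> y)) * (complex_of_real (f x) * cis (- (q \<bullet> x))))"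
      by (intro Bochner_Integration.integral_cong) (auto simp: inner_add_right cm)
    also have "\<dots> = cis (- (q \<bullet> y)) * ft f q" unfolding ft_def by simp
    finally show ?thesis by (simp add: mult.assoc mult.commute mult.left_commute)
  qed
  have "ft (conv f f) q = (LINT x|lborel. (LINT y|lborel. h (x, y)))"
    unfolding ft_def conv_def h_def by (simp flip: integral_complex_of_real)
  also have "\<dots> = (LINT y|lborel. (LINT x|lborel. h (x, y)))"
    using lborel_pair.Fubini_integral[of "\<lambda>x y. h (x, y)"] hi by simp
  also have "\<dots> = (LINT y|lborel. complex_of_real (f y) * cis (- (q \<bullet> y)) * ft f q)"
    by (simp add: inner)
  also have "\<dots> = ft f q * ft f q" by (simp add: ft_def)
  finally show ?thesis .
qed

lemma rho_props:
  fixes rho :: "real^2 \<Rightarrow> real"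
  assumes sch: "schwartz rho"
  shows "rho \<in> borel_measurable borel" "integrable lborel rho"
proof -
  have d: "rho differentiable (at x)" for x using sch unfolding schwartz_def
    by (metis iter_pdiff.simps(1))
  have "continuous_on UNIV rho"
    by (rule continuous_at_imp_continuous_on) (use d differentiable_imp_continuous_within in blast)
  then show m: "rho \<in> borel_measurable borel" by (rule borel_measurable_continuous_onI)
  have "bounded (range (\<lambda>x. (1 + norm x) ^ 3 * iter_pdiff [] rho x))"
    using sch unfolding schwartz_def by blast
  then obtain B where B: "\<And>x. \<bar>(1 + norm x)^3 * rho x\<bar> \<le> B"
    unfolding bounded_iff by auto
  have B0: "0 \<le> B" using B[of 0] by linarith
  have rb: "\<bar>rho x\<bar> \<le> B / (1 + norm x)^3" for x
  proof -
    have p: "0 < (1 + norm x)^3" by (simp add: add_pos_nonneg)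
    have "\<bar>rho x\<bar> * (1 + norm x)^3 \<le> B" using B[of x] p by (simp add: abs_mult mult.commute)
    then show ?thesis using p by (simp add: field_simps)
  qed
  have "(\<integral>\<^sup>+x. ennreal (\<bar>rho x\<bar>) \<partial>lborel) \<le> ennreal (UB * B + UB * 4 * (\<Sum>k. B / 8^k * 4^k))"
  proof (rule shell_bound)
    show "0 \<le> B" by fact
    show "0 \<le> B / 8^k" for k using B0 by simp
    have e: "B / 8^k * 4^k = B * (1/2)^k" for k :: nat
    proof -
      have "(8::real)^k = 4^k * 2^k" by (simp flip: power_mult_distrib)
      then show ?thesis by (simp add: field_simps power_one_over)
    qed
    show "summable (\<lambda>k. B / 8^k * (4::real)^k)" unfolding e
      by (intro summable_mult summable_geometric) simp
    show "\<bar>rho z\<bar> \<le> B" if "norm z < 1" for z :: "real^2"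
    proof -
      have "1 \<le> (1 + norm z)^3" by simp
      moreover have "0 < 1 + norm z" by (intro add_pos_nonneg) auto
      ultimately have "B / (1 + norm z)^3 \<le> B / 1" using B0 by (intro divide_left_mono) auto
      then have "B / (1 + norm z)^3 \<le> B" by simp
      then show ?thesis using rb[of z] by linarith
    qed
    show "\<bar>rho z\<bar> \<le> B / 8^k" if "2^k \<le> norm z" for k and z :: "real^2"
    proof -
      have "(2::real)^k \<le> 1 + norm z" using that by linarith
      then have "((2::real)^k)^3 \<le> (1 + norm z)^3" by (rule power_mono) simp
      moreover have "((2::real)^k)^3 = 8^k" by (simp flip: power_mult add: mult.commute[of k 3] power_mult)
      ultimately have "(8::real)^k \<le> (1 + norm z)^3" by simp
      moreover have "0 < 1 + norm z" by (intro add_pos_nonneg) auto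
      ultimately have "B / (1 + norm z)^3 \<le> B / 8^k" using B0 by (intro divide_left_mono) auto
      then show ?thesis using rb[of z] by linarith
    qed
  qed
  then have "(\<integral>\<^sup>+x. ennreal (norm (rho x)) \<partial>lborel) < \<infinity>"
    by (simp add: le_less_trans)
  then show "integrable lborel rho" using m by (intro integrableI_bounded) auto
qed

lemma Vhat_props:
  fixes rho :: "real^2 \<Rightarrow> real"
  assumes sch: "schwartz rho" and supp: "\<forall>p. norm p > 1 \<longrightarrow> ft rho p = 0"
  shows "\<exists>M\<ge>0. \<forall>eps p. eps > 0 \<longrightarrow> cmod (Vhat rho eps p) \<le> M \<and> (1/eps < norm p \<longrightarrow> Vhat rho eps p = 0)"
proof -
  note rp = rho_props[OF sch]
  define M0 where "M0 = (LINT x|lborel. \<bar>rho x\<bar>)"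
  have M0: "0 \<le> M0" unfolding M0_def by simp
  have ftb: "cmod (ft rho q) \<le> M0" for q
  proof -
    have "cmod (ft rho q) \<le> (LINT x|lborel. cmod (complex_of_real (rho x) * cis (- (q \<bullet> x))))"
      unfolding ft_def by (rule integral_norm_bound)
    also have "\<dots> = M0" unfolding M0_def by (simp add: norm_mult)
    finally show ?thesis .
  qed
  have V: "Vhat rho eps p = ft rho (eps *\<^sub>R p) * ft rho (eps *\<^sub>R p)" for eps p
    unfolding Vhat_def by (rule conv_thm[OF rp])
  show ?thesis
  proof (intro exI[of _ "M0 * M0"] conjI allI impI)
    show "0 \<le> M0 * M0" using M0 by simp
    fix eps :: real and p :: "real^2" assume e: "eps > 0"
    show "cmod (Vhat rho eps p) \<le> M0 * M0" unfolding V norm_mult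
      using ftb M0 by (intro mult_mono) auto
    assume "1/eps < norm p"
    then have "1 < norm (eps *\<^sub>R p)" using e by (simp add: field_simps)
    then show "Vhat rho eps p = 0" unfolding V using supp by simp
  qed
qed

lemma ps_lborel: "product_sigma_finite (\<lambda>_::nat. (lborel :: (real^2) measure))"
  by (simp add: product_sigma_finite_def sigma_finite_lborel)

lemma PiM_reindex_distr:
  fixes e :: "nat \<Rightarrow> nat"
  assumes J: "finite J" and e: "bij_betw e J I"
  shows "distr (PiM I (\<lambda>_. (lborel :: (real^2) measure))) (PiM J (\<lambda>_. lborel)) (\<lambda>x. \<lambda>k\<in>J. x (e k))
       = PiM J (\<lambda>_. lborel)"
proof -
  interpret ps: product_sigma_finite "\<lambda>_::nat. (lborel :: (real^2) measure)" by (rule ps_lborel)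
  have I: "finite I" using e J bij_betw_finite by blast
  have eI: "e k \<in> I" if "k \<in> J" for k using e that by (auto simp: bij_betw_def)
  have meas: "(\<lambda>x. \<lambda>k\<in>J. x (e k)) \<in> measurable (PiM I (\<lambda>_. (lborel :: (real^2) measure))) (PiM J (\<lambda>_. lborel))"
    by (intro measurable_restrict measurable_component_singleton eI)
  show ?thesis
  proof (rule ps.PiM_eqI[OF J])
    show "sets (distr (PiM I (\<lambda>_. lborel)) (PiM J (\<lambda>_. lborel)) (\<lambda>x. \<lambda>k\<in>J. x (e k))) = sets (PiM J (\<lambda>_. lborel))"
      by simp
    fix A assume A: "\<And>k. k \<in> J \<Longrightarrow> A k \<in> sets (lborel :: (real^2) measure)"
    define A' where "A' i = A (the_inv_into J e i)" for i
    have A'1: "A' (e k) = A k" if "k \<in> J" for k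
      unfolding A'_def using e that by (simp add: bij_betw_def the_inv_into_f_f)
    have A'2: "the_inv_into J e i \<in> J" if "i \<in> I" for i
      using e that by (meson bij_betw_def bij_betw_the_inv_into bij_betwE)
    have A'3: "e (the_inv_into J e i) = i" if "i \<in> I" for i
      using e that by (simp add: bij_betw_def f_the_inv_into_f)
    have pre: "(\<lambda>x. \<lambda>k\<in>J. x (e k)) -` PiE J A \<inter> space (PiM I (\<lambda>_. (lborel :: (real^2) measure))) = PiE I A'"
    proof (intro set_eqI iffI)
      fix x assume "x \<in> (\<lambda>x. \<lambda>k\<in>J. x (e k)) -` PiE J A \<inter> space (PiM I (\<lambda>_. (lborel :: (real^2) measure)))"
      then have x1: "\<And>k. k \<in> J \<Longrightarrow> x (e k) \<in> A k" and x2: "x \<in> extensional I"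
        by (auto simp: space_PiM PiE_def Pi_def)
      show "x \<in> PiE I A'"
        using x2 A'2 A'3 x1 unfolding A'_def by (auto simp: PiE_def Pi_def) (metis)
    next
      fix x assume x: "x \<in> PiE I A'"
      then have "\<And>k. k \<in> J \<Longrightarrow> x (e k) \<in> A k" using A'1 eI by (auto simp: PiE_def Pi_def)
      then show "x \<in> (\<lambda>x. \<lambda>k\<in>J. x (e k)) -` PiE J A \<inter> space (PiM I (\<lambda>_. (lborel :: (real^2) measure)))"
        using x by (auto simp: space_PiM PiE_def Pi_def)
    qed
    have "emeasure (distr (PiM I (\<lambda>_. lborel)) (PiM J (\<lambda>_. lborel)) (\<lambda>x. \<lambda>k\<in>J. x (e k))) (PiE J A)
        = emeasure (PiM I (\<lambda>_. lborel)) (PiE I A')"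
      using A by (subst emeasure_distr[OF meas]) (auto simp: pre intro!: sets_PiM_I_finite J)
    also have "\<dots> = (\<Prod>i\<in>I. emeasure lborel (A' i))"
      using A A'2 unfolding A'_def by (intro ps.emeasure_PiM I) auto
    also have "\<dots> = (\<Prod>k\<in>J. emeasure lborel (A k))"
      using A'1 by (subst prod.reindex_bij_betw[OF e, symmetric]) (auto intro!: prod.cong)
    finally show "emeasure (distr (PiM I (\<lambda>_. lborel)) (PiM J (\<lambda>_. lborel)) (\<lambda>x. \<lambda>k\<in>J. x (e k))) (PiE J A)
        = (\<Prod>k\<in>J. emeasure lborel (A k))" .
  qed
qed

abbreviation PP :: "nat \<Rightarrow> (nat \<Rightarrow> real^2) measure" where
  "PP j \<equiv> PiM {..<j} (\<lambda>_. (lborel :: (real^2) measure))"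

lemma drop_idx_upd: "drop_idx i (x(i := y)) = drop_idx i x"
  by (auto simp: drop_idx_def fun_eq_iff)

lemma G_meas:
  fixes F :: "(nat \<Rightarrow> real^2) \<Rightarrow> real^2 \<Rightarrow> ennreal"
  assumes i: "i \<le> j"
    and Fm: "(\<lambda>(q, y). F q y) \<in> borel_measurable (PP j \<Otimes>\<^sub>M lborel)"
    and dep: "\<And>q q' y. (\<And>k. k < j \<Longrightarrow> q k = q' k) \<Longrightarrow> F q y = F q' y"
  shows "(\<lambda>p. F (drop_idx i p) (p i)) \<in> borel_measurable (PP (Suc j))"
proof -
  define e where "e k = (if k < i then k else Suc k)" for k
  have de: "drop_idx i x k = x (e k)" for x k unfolding drop_idx_def e_def by simp
  have rm: "(\<lambda>p. restrict (drop_idx i p) {..<j}) \<in> measurable (PP (Suc j)) (PP j)"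
    unfolding de using i
    by (intro measurable_restrict measurable_component_singleton) (auto simp: e_def)
  have "(\<lambda>p. (\<lambda>(q, y). F q y) (restrict (drop_idx i p) {..<j}, p i)) \<in> borel_measurable (PP (Suc j))"
    using i by (intro measurable_compose[OF _ Fm] measurable_Pair rm measurable_component_singleton) auto
  moreover have "(\<lambda>(q, y). F q y) (restrict (drop_idx i p) {..<j}, p i) = F (drop_idx i p) (p i)" for p
  proof -
    have "restrict (drop_idx i p) {..<j} k = drop_idx i p k" if "k < j" for k using that by simp
    then show ?thesis by (simp only: case_prod_conv) (rule dep, blast)
  qed
  ultimately show ?thesis by simp
qed

lemma integrate_out:
  fixes F :: "(nat \<Rightarrow> real^2) \<Rightarrow> real^2 \<Rightarrow> ennreal"
  assumes i: "i \<le> j"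
    and Fm: "(\<lambda>(q, y). F q y) \<in> borel_measurable (PP j \<Otimes>\<^sub>M lborel)"
    and dep: "\<And>q q' y. (\<And>k. k < j \<Longrightarrow> q k = q' k) \<Longrightarrow> F q y = F q' y"
  shows "(\<integral>\<^sup>+p. F (drop_idx i p) (p i) \<partial>PP (Suc j)) = (\<integral>\<^sup>+q. (\<integral>\<^sup>+y. F q y \<partial>lborel) \<partial>PP j)"
proof -
  interpret ps: product_sigma_finite "\<lambda>_::nat. (lborel :: (real^2) measure)" by (rule ps_lborel)
  define I where "I = {..<Suc j} - {i}"
  have ins: "{..<Suc j} = insert i I" and iI: "i \<notin> I" and fI: "finite I" using i unfolding I_def by auto
  define e where "e k = (if k < i then k else Suc k)" for k
  have e: "bij_betw e {..<j} I"
  proof (rule bij_betwI[where g="\<lambda>k. if k < i then k else k - 1"])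
    show "e \<in> {..<j} \<rightarrow> I" unfolding e_def I_def using i by auto
    show "(\<lambda>k. if k < i then k else k - 1) \<in> I \<rightarrow> {..<j}" unfolding I_def using i by (auto split: if_splits)
  qed (auto simp: e_def I_def)
  have de: "drop_idx i x k = x (e k)" for x k unfolding drop_idx_def e_def by simp
  define H where "H q = (\<integral>\<^sup>+y. F q y \<partial>lborel)" for q
  have Hm: "H \<in> borel_measurable (PP j)"
    unfolding H_def using Fm by (rule lborel.borel_measurable_nn_integral)
  have Hdep: "H q = H q'" if "\<And>k. k < j \<Longrightarrow> q k = q' k" for q q'
  proof -
    have "F q y = F q' y" for y using that by (intro dep) auto
    then have "F q = F q'" by (rule ext)
    then show ?thesis unfolding H_def by simp
  qed
  have rm: "(\<lambda>p. restrict (drop_idx i p) {..<j}) \<in> measurable (PP (Suc j)) (PP j)"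
    unfolding de using e i
    by (intro measurable_restrict measurable_component_singleton) (auto simp: bij_betw_def e_def)
  have Gm: "(\<lambda>p. F (drop_idx i p) (p i)) \<in> borel_measurable (PP (Suc j))"
  proof -
    have "(\<lambda>p. (\<lambda>(q, y). F q y) (restrict (drop_idx i p) {..<j}, p i)) \<in> borel_measurable (PP (Suc j))"
      using i by (intro measurable_compose[OF _ Fm] measurable_Pair rm measurable_component_singleton) auto
    moreover have "(\<lambda>(q, y). F q y) (restrict (drop_idx i p) {..<j}, p i) = F (drop_idx i p) (p i)" for p
    proof -
      have "restrict (drop_idx i p) {..<j} k = drop_idx i p k" if "k < j" for k using that by simp
      then show ?thesis by (simp only: case_prod_conv) (rule dep, blast)
    qed
    ultimately show ?thesis by simp
  qed
  have "(\<integral>\<^sup>+p. F (drop_idx i p) (p i) \<partial>PP (Suc j))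
      = (\<integral>\<^sup>+x. (\<integral>\<^sup>+y. F (drop_idx i (x(i := y))) ((x(i := y)) i) \<partial>lborel) \<partial>PiM I (\<lambda>_. lborel))"
    unfolding ins using Gm unfolding ins by (intro ps.product_nn_integral_insert fI iI)
  also have "\<dots> = (\<integral>\<^sup>+x. H (drop_idx i x) \<partial>PiM I (\<lambda>_. lborel))"
    by (simp add: drop_idx_upd H_def)
  also have "\<dots> = (\<integral>\<^sup>+x. H (\<lambda>k\<in>{..<j}. x (e k)) \<partial>PiM I (\<lambda>_. lborel))"
    by (intro nn_integral_cong Hdep) (simp add: de)
  also have "\<dots> = (\<integral>\<^sup>+q. H q \<partial>distr (PiM I (\<lambda>_. lborel)) (PP j) (\<lambda>x. \<lambda>k\<in>{..<j}. x (e k)))"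
  proof (rule nn_integral_distr[symmetric])
    show "(\<lambda>x. \<lambda>k\<in>{..<j}. x (e k)) \<in> measurable (PiM I (\<lambda>_. lborel)) (PP j)"
      using e by (intro measurable_restrict measurable_component_singleton) (auto simp: bij_betw_def)
  qed (use Hm in simp)
  also have "\<dots> = (\<integral>\<^sup>+q. H q \<partial>PP j)"
    by (simp add: PiM_reindex_distr[OF _ e])
  finally show ?thesis unfolding H_def .
qed

lemma Gk_nonneg: "0 \<le> Gk nu m x"
proof (induction nu m x rule: Gk.induct)
  case (3 nu k x)
  have pos: "0 \<le> inverse (1 + 4 / nu ^ 4 * Gk nu (Suc k) y)" for y
  proof -
    have "0 \<le> 4 / nu ^ 4 * Gk nu (Suc k) y" using 3[of y] by (simp add: zero_le_even_power)
    then show ?thesis by simp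
  qed
  show ?case
  proof (cases "(\<lambda>y. inverse (1 + 4 / nu ^ 4 * Gk nu (Suc k) y)) integrable_on {0..x}")
    case True
    have "0 \<le> integral {0..x} (\<lambda>y. inverse (1 + 4 / nu ^ 4 * Gk nu (Suc k) y))"
      by (rule Henstock_Kurzweil_Integration.integral_nonneg[OF True pos])
    then show ?thesis by (simp only: Gk.simps)
  next
    case False
    then show ?thesis by (simp add: not_integrable_integral)
  qed
qed auto

lemma Res_bound:
  assumes lam: "lam > 0"
  shows "cmod (Res lhat nu lam eps m k psi p) \<le> cmod (psi p) / (lam + nu^2/2 * (norm (sumP k p))^2)"
proof -
  define q where "q = nu^2/2 * (norm (sumP k p))^2"
  have q0: "0 \<le> q" unfolding q_def by simp
  define G where "G = Gk nu m (Leps lhat eps (lam + q))"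
  have "0 \<le> 4 / nu ^ 4 * G" unfolding G_def by (simp add: Gk_nonneg zero_le_even_power)
  then have "0 \<le> q * (4 / nu ^ 4 * G)" using q0 by (rule mult_nonneg_nonneg[rotated])
  then have le: "lam + q \<le> lam + q * (1 + 4 / nu ^ 4 * G)" by (simp add: distrib_left)
  have p1: "0 < lam + q" using lam q0 by simp
  have inv: "inverse (lam + q * (1 + 4 / nu ^ 4 * G)) \<le> inverse (lam + q)"
    using le p1 by (rule le_imp_inverse_le)
  have inv0: "0 \<le> inverse (lam + q * (1 + 4 / nu ^ 4 * G))" using le p1 by simp
  have "cmod (Res lhat nu lam eps m k psi p) = inverse (lam + q * (1 + 4 / nu ^ 4 * G)) * cmod (psi p)"
    unfolding Res_def Let_def q_def[symmetric] G_def[symmetric]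
    by (simp only: norm_mult norm_of_real abs_of_nonneg[OF inv0])
  also have "\<dots> \<le> inverse (lam + q) * cmod (psi p)" using inv by (rule mult_right_mono) simp
  finally show ?thesis unfolding q_def by (simp add: field_simps)
qed

lemma sumP_split:
  assumes "i < Suc k"
  shows "sumP (Suc k) p = p i + sumP k (drop_idx i p)"
  using assms
proof (induction k arbitrary: i)
  case 0 then show ?case by (simp add: sumP_def)
next
  case (Suc k)
  show ?case
  proof (cases "i = Suc k")
    case True
    have "sumP (Suc k) (drop_idx i p) = sumP (Suc k) p"
      unfolding sumP_def drop_idx_def using True by (intro sum.cong) auto
    then show ?thesis using True by (simp add: sumP_def add.commute)
  next
    case False
    then have ik: "i < Suc k" using Suc.prems by simp
    have "sumP (Suc (Suc k)) p = sumP (Suc k) p + p (Suc k)" by (simp add: sumP_def)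
    also have "\<dots> = p i + sumP k (drop_idx i p) + p (Suc k)" using Suc.IH[OF ik] by simp
    also have "sumP (Suc k) (drop_idx i p) = sumP k (drop_idx i p) + p (Suc k)"
      using ik by (simp add: sumP_def drop_idx_def)
    ultimately show ?thesis by (simp add: add.assoc)
  qed
qed

lemma norm2: "(norm (x::real^2))^2 = (x$1)^2 + (x$2)^2"
  unfolding norm_vec_def L2_set_def by (simp add: UNIV_2)

lemma cross_bound: "\<bar>cross a (a + b)\<bar> \<le> norm a * norm b"
proof -
  have c: "cross a (a + b) = a$1 * b$2 - a$2 * b$1" unfolding cross_def by (simp add: algebra_simps)
  have "(a$1 * b$2 - a$2 * b$1)^2 \<le> (norm a)^2 * (norm b)^2"
  proof -
    have "(norm a)^2 * (norm b)^2 - (a$1 * b$2 - a$2 * b$1)^2 = (a$1 * b$1 + a$2 * b$2)^2"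
      unfolding norm2 by (simp add: power2_eq_square algebra_simps)
    then show ?thesis by (smt (verit) zero_le_power2)
  qed
  then have "(a$1 * b$2 - a$2 * b$1)^2 \<le> (norm a * norm b)^2" by (simp add: power_mult_distrib)
  then have "\<bar>a$1 * b$2 - a$2 * b$1\<bar> \<le> \<bar>norm a * norm b\<bar>" by (simp only: abs_le_square_iff)
  then show ?thesis unfolding c by simp
qed

lemma Aplus_bound:
  assumes cc: "cc = lhat / sqrt (ln (1 / eps))" and cc0: "0 \<le> cc"
  shows "cmod (Aplus lhat eps k psi p) \<le> cc / real (Suc k) *
     (\<Sum>i<Suc k. norm (p i) * norm (sumP k (drop_idx i p)) * cmod (psi (drop_idx i p)))"
proof -
  have "cmod (Aplus lhat eps k psi p) = cc / real (Suc k) *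
      cmod (\<Sum>i<Suc k. complex_of_real (cross (p i) (sumP (Suc k) p)) * psi (drop_idx i p))"
  proof -
    have "cmod (1 + complex_of_nat k) = 1 + real k" by (metis norm_of_nat of_nat_Suc)
    then show ?thesis unfolding Aplus_def cc[symmetric] using cc0 by (simp add: norm_mult norm_divide)
  qed
  also have "\<dots> \<le> cc / real (Suc k) *
     (\<Sum>i<Suc k. norm (p i) * norm (sumP k (drop_idx i p)) * cmod (psi (drop_idx i p)))"
  proof (rule mult_left_mono)
    have "cmod (\<Sum>i<Suc k. complex_of_real (cross (p i) (sumP (Suc k) p)) * psi (drop_idx i p))
        \<le> (\<Sum>i<Suc k. cmod (complex_of_real (cross (p i) (sumP (Suc k) p)) * psi (drop_idx i p)))"
      by (rule norm_sum)
    also have "\<dots> \<le> (\<Sum>i<Suc k. norm (p i) * norm (sumP k (drop_idx i p)) * cmod (psi (drop_idx i p)))"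
    proof (rule sum_mono)
      fix i assume "i \<in> {..<Suc k}"
      then have "sumP (Suc k) p = p i + sumP k (drop_idx i p)" by (intro sumP_split) auto
      then have "\<bar>cross (p i) (sumP (Suc k) p)\<bar> \<le> norm (p i) * norm (sumP k (drop_idx i p))"
        using cross_bound by simp
      then show "cmod (complex_of_real (cross (p i) (sumP (Suc k) p)) * psi (drop_idx i p))
          \<le> norm (p i) * norm (sumP k (drop_idx i p)) * cmod (psi (drop_idx i p))"
        unfolding norm_mult by (intro mult_right_mono) auto
    qed
    finally show "cmod (\<Sum>i<Suc k. complex_of_real (cross (p i) (sumP (Suc k) p)) * psi (drop_idx i p))
        \<le> (\<Sum>i<Suc k. norm (p i) * norm (sumP k (drop_idx i p)) * cmod (psi (drop_idx i p)))" .
  qed (use cc0 in simp)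
  finally show ?thesis .
qed

lemma Vvec_bound:
  assumes cc: "cc = lhat / sqrt (ln (1 / eps))" and cc0: "0 \<le> cc"
  shows "cmod (Vvec lhat eps c p) \<le> cc * norm (p 0)"
  unfolding Vvec_def cc[symmetric] using cc0
  by (auto simp: norm_mult abs_mult intro!: mult_left_mono component_le_norm_cart)

fun Bf :: "real \<Rightarrow> real \<Rightarrow> real \<Rightarrow> nat \<Rightarrow> (nat \<Rightarrow> real^2) \<Rightarrow> real" where
  "Bf cc a lam 0 p = 0"
| "Bf cc a lam (Suc 0) p = cc * norm (p 0) / (lam + a * (norm (p 0))^2)"
| "Bf cc a lam (Suc (Suc j)) p = cc / real (Suc (Suc j)) *
     (\<Sum>i<Suc (Suc j). norm (p i) * norm (sumP (Suc j) (drop_idx i p)) * Bf cc a lam (Suc j) (drop_idx i p))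
     / (lam + a * (norm (sumP (Suc (Suc j)) p))^2)"

lemma Bf_nonneg:
  assumes "0 \<le> cc" "0 < lam" "0 \<le> a"
  shows "0 \<le> Bf cc a lam j p"
  using assms
proof (induction cc a lam j p rule: Bf.induct)
  case (3 cc a lam j p)
  have "0 \<le> lam + a * (norm (sumP (Suc (Suc j)) p))^2" using 3 by (intro add_nonneg_nonneg) auto
  then show ?case using 3
    by (simp only: Bf.simps) (intro divide_nonneg_nonneg mult_nonneg_nonneg sum_nonneg; auto)
qed auto

lemma bfun_le_Bf:
  assumes lam: "lam > 0" and cc: "cc = lhat / sqrt (ln (1 / eps))" and cc0: "0 \<le> cc" and j: "1 \<le> j"
  shows "cmod (bfun lhat nu lam eps n j c p) \<le> Bf cc (nu^2/2) lam j p"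
  using j
proof (induction j arbitrary: p)
  case 0 then show ?case by simp
next
  case (Suc j)
  have pos: "0 < lam + nu^2/2 * (norm x)^2" for x :: "real^2" using lam by (simp add: add_pos_nonneg)
  show ?case
  proof (cases j)
    case 0
    have "cmod (bfun lhat nu lam eps n (Suc 0) c p) \<le> cmod (Vvec lhat eps c p) / (lam + nu^2/2 * (norm (sumP 1 p))^2)"
      using Res_bound[OF lam, of lhat nu eps n 1 "Vvec lhat eps c" p] by simp
    also have "\<dots> \<le> cc * norm (p 0) / (lam + nu^2/2 * (norm (p 0))^2)"
      using Vvec_bound[OF cc cc0, of c p] pos[of "p 0"] by (simp add: sumP_def divide_right_mono)
    finally show ?thesis using 0 by simp
  next
    case (Suc j')
    note IH = Suc.IH[unfolded Suc]
    have "cmod (bfun lhat nu lam eps n (Suc (Suc j')) c p)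
        \<le> cmod (Aplus lhat eps (Suc j') (bfun lhat nu lam eps n (Suc j') c) p) / (lam + nu^2/2 * (norm (sumP (Suc (Suc j')) p))^2)"
      using Res_bound[OF lam, of lhat nu eps "n - Suc j'" "Suc (Suc j')" "Aplus lhat eps (Suc j') (bfun lhat nu lam eps n (Suc j') c)" p] by simp
    also have "\<dots> \<le> (cc / real (Suc (Suc j')) *
     (\<Sum>i<Suc (Suc j'). norm (p i) * norm (sumP (Suc j') (drop_idx i p)) * Bf cc (nu^2/2) lam (Suc j') (drop_idx i p)))
       / (lam + nu^2/2 * (norm (sumP (Suc (Suc j')) p))^2)"
    proof (rule divide_right_mono)
      show "0 \<le> lam + nu^2/2 * (norm (sumP (Suc (Suc j')) p))^2" using pos[of "sumP (Suc (Suc j')) p"] by simp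
      have "cmod (Aplus lhat eps (Suc j') (bfun lhat nu lam eps n (Suc j') c) p)
        \<le> cc / real (Suc (Suc j')) *
     (\<Sum>i<Suc (Suc j'). norm (p i) * norm (sumP (Suc j') (drop_idx i p)) * cmod (bfun lhat nu lam eps n (Suc j') c (drop_idx i p)))"
        by (rule Aplus_bound[OF cc cc0])
      also have "\<dots> \<le> cc / real (Suc (Suc j')) *
     (\<Sum>i<Suc (Suc j'). norm (p i) * norm (sumP (Suc j') (drop_idx i p)) * Bf cc (nu^2/2) lam (Suc j') (drop_idx i p))"
        using cc0 IH by (intro mult_left_mono sum_mono mult_left_mono) auto
      finally show "cmod (Aplus lhat eps (Suc j') (bfun lhat nu lam eps n (Suc j') c) p) \<le> cc / real (Suc (Suc j')) *
     (\<Sum>i<Suc (Suc j'). norm (p i) * norm (sumP (Suc j') (drop_idx i p)) * Bf cc (nu^2/2) lam (Suc j') (drop_idx i p))" .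
    qed
    finally show ?thesis using Suc by simp
  qed
qed

lemma sumP_meas:
  assumes "\<And>k. k < m \<Longrightarrow> (\<lambda>x. g x k) \<in> borel_measurable N"
  shows "(\<lambda>x. sumP m (g x)) \<in> borel_measurable N"
  unfolding sumP_def using assms by (intro borel_measurable_sum) auto

lemma drop_meas:
  assumes "\<And>k. k < Suc m \<Longrightarrow> (\<lambda>x. g x k) \<in> borel_measurable N" and "k < m"
  shows "(\<lambda>x. drop_idx i (g x) k) \<in> borel_measurable N"
  unfolding drop_idx_def using assms by auto

lemma bmn: "f \<in> borel_measurable M \<Longrightarrow> (\<lambda>x. norm (f x)) \<in> borel_measurable M"
  by measurable

lemma Bf_meas:
  assumes "\<And>k. k < j \<Longrightarrow> (\<lambda>x. g x k) \<in> borel_measurable N"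
  shows "(\<lambda>x. Bf cc a lam j (g x)) \<in> borel_measurable N"
  using assms
proof (induction j arbitrary: g)
  case 0 then show ?case by simp
next
  case (Suc j)
  show ?case
  proof (cases j)
    case 0
    have m0: "(\<lambda>x. g x 0) \<in> borel_measurable N" using Suc.prems 0 by simp
    show ?thesis using 0 by simp (intro borel_measurable_divide borel_measurable_times borel_measurable_add
       borel_measurable_power bmn m0 borel_measurable_const)
  next
    case (Suc j')
    note g = Suc.prems[unfolded Suc]
    have IH: "(\<lambda>x. Bf cc a lam (Suc j') (drop_idx i (g x))) \<in> borel_measurable N" for i
      by (rule Suc.IH[unfolded Suc], rule drop_meas[where m="Suc j'" and g=g]) (use g in auto)
    have S1: "(\<lambda>x. sumP (Suc j') (drop_idx i (g x))) \<in> borel_measurable N" for i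
      by (rule sumP_meas, rule drop_meas[where m="Suc j'" and g=g]) (use g in auto)
    have S2: "(\<lambda>x. sumP (Suc (Suc j')) (g x)) \<in> borel_measurable N"
      by (intro sumP_meas g)
    have gi: "(\<lambda>x. g x i) \<in> borel_measurable N" if "i < Suc (Suc j')" for i using g that .
    show ?thesis unfolding Suc
      by (simp only: Bf.simps) (intro borel_measurable_divide borel_measurable_times borel_measurable_add
       borel_measurable_power bmn borel_measurable_const borel_measurable_sum IH S1 S2 gi; simp)
  qed
qed

lemma Bf_dep:
  assumes "\<And>k. k < j \<Longrightarrow> p k = q k"
  shows "Bf cc a lam j p = Bf cc a lam j q"
  using assms
proof (induction j arbitrary: p q)
  case 0 then show ?case by simp
next
  case (Suc j)
  show ?case
  proof (cases j)
    case 0 then show ?thesis using Suc.prems by simp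
  next
    case (Suc j')
    note pq = Suc.prems[unfolded Suc]
    have d: "drop_idx i p k = drop_idx i q k" if "k < Suc j'" for i k
      unfolding drop_idx_def using pq that by auto
    have s1: "sumP (Suc j') (drop_idx i p) = sumP (Suc j') (drop_idx i q)" for i
      unfolding sumP_def using d by (intro sum.cong) auto
    have s2: "sumP (Suc (Suc j')) p = sumP (Suc (Suc j')) q"
      unfolding sumP_def using pq by (intro sum.cong) auto
    have b: "Bf cc a lam (Suc j') (drop_idx i p) = Bf cc a lam (Suc j') (drop_idx i q)" for i
      using Suc.IH[unfolded Suc] d by blast
    show ?thesis unfolding Suc using pq by (simp only: Bf.simps s1 s2 b) (intro arg_cong2[where f="(/)"] arg_cong2[where f="(*)"] refl sum.cong, auto)
  qed
qed

definition ww :: "real \<Rightarrow> real \<Rightarrow> real^2 \<Rightarrow> real" where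
  "ww M R y = M * indicator (cball 0 R) y / (norm y)^2"

definition Wp :: "real \<Rightarrow> real \<Rightarrow> nat \<Rightarrow> (nat \<Rightarrow> real^2) \<Rightarrow> real" where
  "Wp M R j p = (\<Prod>k<j. ww M R (p k))"

lemma ww_nonneg: "0 \<le> M \<Longrightarrow> 0 \<le> ww M R y"
  unfolding ww_def by simp

lemma ww_sq: "0 \<le> M \<Longrightarrow> ww M R y * (norm y)^2 \<le> M * indicator (cball 0 R) y"
  unfolding ww_def by (cases "y = 0") auto

lemma Wp_nonneg: "0 \<le> M \<Longrightarrow> 0 \<le> Wp M R j p"
  unfolding Wp_def by (simp add: prod_nonneg ww_nonneg)

lemma prod_split:
  fixes f :: "real^2 \<Rightarrow> real"
  assumes "i < Suc k"
  shows "(\<Prod>k'<Suc k. f (p k')) = f (p i) * (\<Prod>k'<k. f (drop_idx i p k'))"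
  using assms
proof (induction k arbitrary: i)
  case 0 then show ?case by simp
next
  case (Suc k)
  show ?case
  proof (cases "i = Suc k")
    case True
    have "(\<Prod>k'<Suc k. f (drop_idx i p k')) = (\<Prod>k'<Suc k. f (p k'))"
      unfolding drop_idx_def using True by (intro prod.cong) auto
    then show ?thesis using True by (simp add: mult.commute)
  next
    case False
    then have ik: "i < Suc k" using Suc.prems by simp
    have "(\<Prod>k'<Suc (Suc k). f (p k')) = (\<Prod>k'<Suc k. f (p k')) * f (p (Suc k))"
      by (rule prod.lessThan_Suc)
    also have "\<dots> = f (p i) * (\<Prod>k'<k. f (drop_idx i p k')) * f (p (Suc k))"
      by (simp only: Suc.IH[OF ik])
    also have "\<dots> = f (p i) * ((\<Prod>k'<k. f (drop_idx i p k')) * f (drop_idx i p k))"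
      using ik by (simp add: drop_idx_def mult.assoc)
    also have "(\<Prod>k'<k. f (drop_idx i p k')) * f (drop_idx i p k) = (\<Prod>k'<Suc k. f (drop_idx i p k'))"
      by (rule prod.lessThan_Suc[symmetric])
    finally show ?thesis .
  qed
qed

lemma Wp_split: "i < Suc m \<Longrightarrow> Wp M R (Suc m) p = ww M R (p i) * Wp M R m (drop_idx i p)"
  unfolding Wp_def by (rule prod_split)

lemma pred_cball2[measurable]: "Measurable.pred borel (\<lambda>x::'a::metric_space. x \<in> cball c r)"
  using borel_closed[OF closed_cball, of c r] unfolding pred_def by (simp add: cball_def)

lemma ww_meas[measurable]: "ww M R \<in> borel_measurable borel"
  unfolding ww_def by measurable

lemma Wp_meas:
  assumes "\<And>k. k < j \<Longrightarrow> (\<lambda>x. g x k) \<in> borel_measurable N"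
  shows "(\<lambda>x. Wp M R j (g x)) \<in> borel_measurable N"
  unfolding Wp_def using assms by (intro borel_measurable_prod measurable_compose[OF _ ww_meas]) auto

lemma Wp_dep: "(\<And>k. k < j \<Longrightarrow> p k = q k) \<Longrightarrow> Wp M R j p = Wp M R j q"
  unfolding Wp_def by (intro prod.cong) auto

lemma sumP_dep: "(\<And>k. k < j \<Longrightarrow> p k = q k) \<Longrightarrow> sumP j p = sumP j q"
  unfolding sumP_def by (intro sum.cong) auto

lemma Bf_sq_bound:
  assumes cc: "0 \<le> cc" and lam: "0 < lam" and a: "0 \<le> a"
  shows "(Bf cc a lam (Suc (Suc j)) p)^2 \<le> cc^2 / real (Suc (Suc j)) *
     (\<Sum>i<Suc (Suc j). (norm (p i) * norm (sumP (Suc j) (drop_idx i p)) * Bf cc a lam (Suc j) (drop_idx i p))^2)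
     / (lam + a * (norm (sumP (Suc (Suc j)) p))^2)^2"
proof -
  define u where "u i = norm (p i) * norm (sumP (Suc j) (drop_idx i p)) * Bf cc a lam (Suc j) (drop_idx i p)" for i
  define D where "D = lam + a * (norm (sumP (Suc (Suc j)) p))^2"
  define n where "n = real (Suc (Suc j))"
  have D: "0 < D" unfolding D_def using lam a by (simp add: add_pos_nonneg)
  have n: "0 < n" unfolding n_def by simp
  have "(Bf cc a lam (Suc (Suc j)) p)^2 = cc^2 / n^2 * (\<Sum>i<Suc (Suc j). u i)^2 / D^2"
    unfolding u_def D_def n_def by (simp only: Bf.simps) (simp add: power_divide power_mult_distrib)
  also have "\<dots> \<le> cc^2 / n^2 * ((\<Sum>i<Suc (Suc j). (u i)^2) * n) / D^2"
  proof -
    have "(\<Sum>i<Suc (Suc j). u i)^2 \<le> (\<Sum>i<Suc (Suc j). (u i)^2) * n"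
      using sum_squared_le_sum_of_squares[of u "{..<Suc (Suc j)}"] unfolding n_def by simp
    then show ?thesis using D by (intro divide_right_mono mult_left_mono) auto
  qed
  also have "\<dots> = cc^2 / n * (\<Sum>i<Suc (Suc j). (u i)^2) / D^2"
  proof -
    define S where "S = (\<Sum>i<Suc (Suc j). (u i)^2)"
    have "cc^2 / n^2 * (S * n) / D^2 = cc^2 / n * S / D^2" using n by (simp add: power2_eq_square field_simps)
    then show ?thesis unfolding S_def .
  qed
  finally show ?thesis unfolding u_def D_def n_def .
qed

lemma fst_comp_meas: "k < m \<Longrightarrow> (\<lambda>z::(nat \<Rightarrow> real^2) \<times> (real^2). fst z k) \<in> borel_measurable (PP m \<Otimes>\<^sub>M lborel)"
  by (intro measurable_compose[OF measurable_fst, where g="\<lambda>x. x k"] measurable_component_singleton) auto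

context
  fixes M R cc a lam :: real
  assumes M: "0 \<le> M" and a: "0 < a" and lam: "0 < lam" and cc: "0 \<le> cc"
begin

definition FF :: "nat \<Rightarrow> nat \<Rightarrow> (nat \<Rightarrow> real^2) \<Rightarrow> real^2 \<Rightarrow> real" where
  "FF e m q y = ww M R y * (norm y)^2 * (Wp M R m q * (norm (sumP m q))^2 * (Bf cc a lam m q)^2)
     / (lam + a * (norm (y + sumP m q))^2)^e"

definition AA :: "nat \<Rightarrow> (nat \<Rightarrow> real^2) \<Rightarrow> real" where
  "AA m q = Wp M R m q * (norm (sumP m q))^2 * (Bf cc a lam m q)^2"

lemma AA_nonneg: "0 \<le> AA m q"
  unfolding AA_def using M by (simp add: Wp_nonneg)

lemma den_pos: "0 < lam + a * (norm (y::real^2))^2"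
  using lam a by (simp add: add_pos_nonneg)

lemma FF_nonneg: "0 \<le> FF e m q y"
  unfolding FF_def using M den_pos[of "y + sumP m q"]
  by (intro divide_nonneg_pos mult_nonneg_nonneg ww_nonneg AA_nonneg[unfolded AA_def]) auto

lemma AA_meas: "(\<lambda>q. AA m q) \<in> borel_measurable (PP m)"
  unfolding AA_def
  by (intro borel_measurable_times borel_measurable_power bmn Wp_meas sumP_meas Bf_meas measurable_component_singleton) auto

lemma FF_meas: "(\<lambda>(q, y). ennreal (FF e m q y)) \<in> borel_measurable (PP m \<Otimes>\<^sub>M lborel)"
proof -
  have [measurable]: "(\<lambda>z::(nat \<Rightarrow> real^2) \<times> (real^2). Wp M R m (fst z)) \<in> borel_measurable (PP m \<Otimes>\<^sub>M lborel)"
    by (intro Wp_meas fst_comp_meas)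
  have [measurable]: "(\<lambda>z::(nat \<Rightarrow> real^2) \<times> (real^2). sumP m (fst z)) \<in> borel_measurable (PP m \<Otimes>\<^sub>M lborel)"
    by (intro sumP_meas fst_comp_meas)
  have [measurable]: "(\<lambda>z::(nat \<Rightarrow> real^2) \<times> (real^2). Bf cc a lam m (fst z)) \<in> borel_measurable (PP m \<Otimes>\<^sub>M lborel)"
    by (intro Bf_meas fst_comp_meas)
  have "(\<lambda>z::(nat \<Rightarrow> real^2) \<times> (real^2). ennreal (FF e m (fst z) (snd z))) \<in> borel_measurable (PP m \<Otimes>\<^sub>M lborel)"
    unfolding FF_def by measurable
  then show ?thesis by (simp add: case_prod_beta')
qed

lemma FF_dep: "(\<And>k. k < m \<Longrightarrow> q k = q' k) \<Longrightarrow> ennreal (FF e m q y) = ennreal (FF e m q' y)"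
  unfolding FF_def by (simp add: Wp_dep[of m q q'] sumP_dep[of m q q'] Bf_dep[of m q q'])

lemma level_int:
  assumes CK0: "0 \<le> CK"
    and CK: "\<And>s. (\<integral>\<^sup>+y. ennreal (indicator (cball 0 R) (y::real^2) / (lam + a * (norm (y + s))^2)^e) \<partial>lborel) \<le> ennreal CK"
  shows "(\<integral>\<^sup>+p. ennreal (\<Sum>i<Suc m. FF e m (drop_idx i p) (p i)) \<partial>PP (Suc m))
     \<le> ennreal (real (Suc m) * M * CK) * (\<integral>\<^sup>+q. ennreal (AA m q) \<partial>PP m)"
proof -
  have inner: "(\<integral>\<^sup>+y. ennreal (FF e m q y) \<partial>lborel) \<le> ennreal (M * CK) * ennreal (AA m q)" for q
  proof -
    have "(\<integral>\<^sup>+y. ennreal (FF e m q y) \<partial>lborel)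
        \<le> (\<integral>\<^sup>+y. ennreal (M * AA m q) * ennreal (indicator (cball 0 R) y / (lam + a * (norm (y + sumP m q))^2)^e) \<partial>lborel)"
    proof (rule nn_integral_mono)
      fix y :: "real^2"
      have d: "0 < (lam + a * (norm (y + sumP m q))^2)^e" using den_pos by simp
      have "FF e m q y = (ww M R y * (norm y)^2) * AA m q / (lam + a * (norm (y + sumP m q))^2)^e"
        unfolding FF_def AA_def by simp
      also have "\<dots> \<le> (M * indicator (cball 0 R) y) * AA m q / (lam + a * (norm (y + sumP m q))^2)^e"
        using d AA_nonneg by (intro divide_right_mono mult_right_mono ww_sq M) auto
      also have "\<dots> = (M * AA m q) * (indicator (cball 0 R) y / (lam + a * (norm (y + sumP m q))^2)^e)"
        by simp
      finally show "ennreal (FF e m q y) \<le> ennreal (M * AA m q) * ennreal (indicator (cball 0 R) y / (lam + a * (norm (y + sumP m q))^2)^e)"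
        using M AA_nonneg by (simp add: ennreal_mult'[symmetric] ennreal_leI)
    qed
    also have "\<dots> = ennreal (M * AA m q) * (\<integral>\<^sup>+y. ennreal (indicator (cball 0 R) y / (lam + a * (norm (y + sumP m q))^2)^e) \<partial>lborel)"
      by (rule nn_integral_cmult) measurable
    also have "\<dots> \<le> ennreal (M * AA m q) * ennreal CK"
      by (intro mult_left_mono CK) auto
    also have "\<dots> = ennreal (M * CK) * ennreal (AA m q)"
      using M CK0 AA_nonneg by (simp add: ennreal_mult'[symmetric] mult_ac)
    finally show ?thesis .
  qed
  have each: "(\<integral>\<^sup>+p. ennreal (FF e m (drop_idx i p) (p i)) \<partial>PP (Suc m))
      \<le> ennreal (M * CK) * (\<integral>\<^sup>+q. ennreal (AA m q) \<partial>PP m)" if "i < Suc m" for i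
  proof -
    have "(\<integral>\<^sup>+p. ennreal (FF e m (drop_idx i p) (p i)) \<partial>PP (Suc m))
        = (\<integral>\<^sup>+q. (\<integral>\<^sup>+y. ennreal (FF e m q y) \<partial>lborel) \<partial>PP m)"
      using that by (intro integrate_out[where F="\<lambda>q y. ennreal (FF e m q y)"] FF_meas FF_dep) auto
    also have "\<dots> \<le> (\<integral>\<^sup>+q. ennreal (M * CK) * ennreal (AA m q) \<partial>PP m)"
      by (intro nn_integral_mono inner)
    also have "\<dots> = ennreal (M * CK) * (\<integral>\<^sup>+q. ennreal (AA m q) \<partial>PP m)"
      by (intro nn_integral_cmult measurable_compose[OF AA_meas measurable_ennreal])
    finally show ?thesis .
  qed
  have "(\<integral>\<^sup>+p. ennreal (\<Sum>i<Suc m. FF e m (drop_idx i p) (p i)) \<partial>PP (Suc m))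
      = (\<integral>\<^sup>+p. (\<Sum>i<Suc m. ennreal (FF e m (drop_idx i p) (p i))) \<partial>PP (Suc m))"
    by (intro nn_integral_cong sum_ennreal[symmetric] FF_nonneg)
  also have "\<dots> = (\<Sum>i<Suc m. (\<integral>\<^sup>+p. ennreal (FF e m (drop_idx i p) (p i)) \<partial>PP (Suc m)))"
    by (intro nn_integral_sum G_meas[where F="\<lambda>q y. ennreal (FF e m q y)"] FF_meas FF_dep) auto
  also have "\<dots> \<le> (\<Sum>i<Suc m. ennreal (M * CK) * (\<integral>\<^sup>+q. ennreal (AA m q) \<partial>PP m))"
    by (intro sum_mono each) auto
  also have "\<dots> = ennreal (real (Suc m) * M * CK) * (\<integral>\<^sup>+q. ennreal (AA m q) \<partial>PP m)"
    using M CK0 by (simp add: ennreal_mult' mult.assoc ennreal_of_nat_eq_real_of_nat)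
  finally show ?thesis .
qed

end

context
  fixes M R cc a lam :: real
  assumes M: "0 \<le> M" and a: "0 < a" and lam: "0 < lam" and cc: "0 \<le> cc"
begin

lemma ennreal_mult3: "0 \<le> x \<Longrightarrow> 0 \<le> y \<Longrightarrow> 0 \<le> z \<Longrightarrow>
  ennreal x * (ennreal y * (ennreal z * X)) = ennreal (x * y * z) * X"
  by (simp add: ennreal_mult mult.assoc)

definition Xf :: "nat \<Rightarrow> ennreal" where
  "Xf j = (\<integral>\<^sup>+p. ennreal (Wp M R j p * (Bf cc a lam j p)^2 * (lam + a * (norm (sumP j p))^2)) \<partial>PP j)"

definition Yf :: "nat \<Rightarrow> ennreal" where
  "Yf j = (\<integral>\<^sup>+p. ennreal (Wp M R j p * (Bf cc a lam j p)^2) \<partial>PP j)"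

lemma AA_le: "(\<integral>\<^sup>+q. ennreal (AA M R cc a lam m q) \<partial>PP m) \<le> ennreal (1/a) * Xf m"
proof -
  have "(\<integral>\<^sup>+q. ennreal (AA M R cc a lam m q) \<partial>PP m)
      \<le> (\<integral>\<^sup>+q. ennreal (1/a) * ennreal (Wp M R m q * (Bf cc a lam m q)^2 * (lam + a * (norm (sumP m q))^2)) \<partial>PP m)"
  proof (rule nn_integral_mono)
    fix q
    have W: "0 \<le> Wp M R m q * (Bf cc a lam m q)^2" using M by (simp add: Wp_nonneg)
    have "(norm (sumP m q))^2 \<le> (1/a) * (lam + a * (norm (sumP m q))^2)"
      using a lam by (simp add: field_simps)
    then have "AA M R cc a lam m q \<le> (1/a) * (Wp M R m q * (Bf cc a lam m q)^2 * (lam + a * (norm (sumP m q))^2))"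
      unfolding AA_def[OF M a lam cc] using W by (smt (verit, best) mult.commute mult.left_commute mult_left_mono)
    then show "ennreal (AA M R cc a lam m q) \<le> ennreal (1/a) * ennreal (Wp M R m q * (Bf cc a lam m q)^2 * (lam + a * (norm (sumP m q))^2))"
      using a by (simp add: ennreal_mult'[symmetric] ennreal_leI)
  qed
  also have "\<dots> = ennreal (1/a) * Xf m"
    unfolding Xf_def
    by (intro nn_integral_cmult measurable_compose[OF _ measurable_ennreal]
        borel_measurable_times borel_measurable_power borel_measurable_add borel_measurable_const bmn
        Wp_meas sumP_meas Bf_meas measurable_component_singleton) auto
  finally show ?thesis .
qed


lemma sumFF_meas: "(\<lambda>p. ennreal (\<Sum>i<Suc m. FF M R cc a lam e m (drop_idx i p) (p i))) \<in> borel_measurable (PP (Suc m))"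
proof -
  have "(\<lambda>p. (\<Sum>i<Suc m. ennreal (FF M R cc a lam e m (drop_idx i p) (p i)))) \<in> borel_measurable (PP (Suc m))"
    by (intro borel_measurable_sum G_meas[where F="\<lambda>q y. ennreal (FF M R cc a lam e m q y)"]
        FF_meas[OF M a lam cc] FF_dep[OF M a lam cc]) auto
  moreover have "(\<Sum>i<Suc m. ennreal (FF M R cc a lam e m (drop_idx i p) (p i)))
      = ennreal (\<Sum>i<Suc m. FF M R cc a lam e m (drop_idx i p) (p i))" for p
    by (intro sum_ennreal FF_nonneg[OF M a lam cc])
  ultimately show ?thesis by simp
qed

lemma term_eq:
  assumes i: "i < Suc m"
  shows "Wp M R (Suc m) p * (norm (p i) * norm (sumP m (drop_idx i p)) * Bf cc a lam m (drop_idx i p))^2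
         / (lam + a * (norm (sumP (Suc m) p))^2)^e
       = FF M R cc a lam e m (drop_idx i p) (p i)"
proof -
  have S: "sumP (Suc m) p = p i + sumP m (drop_idx i p)" using i by (rule sumP_split)
  show ?thesis unfolding FF_def[OF M a lam cc] Wp_split[OF i] S
    by (simp add: power_mult_distrib mult_ac)
qed

lemma X_pt:
  shows "Wp M R (Suc (Suc j)) p * (Bf cc a lam (Suc (Suc j)) p)^2 * (lam + a * (norm (sumP (Suc (Suc j)) p))^2)
     \<le> cc^2 / real (Suc (Suc j)) * (\<Sum>i<Suc (Suc j). FF M R cc a lam 1 (Suc j) (drop_idx i p) (p i))"
proof -
  define D where "D = lam + a * (norm (sumP (Suc (Suc j)) p))^2"
  define u where "u i = norm (p i) * norm (sumP (Suc j) (drop_idx i p)) * Bf cc a lam (Suc j) (drop_idx i p)" for i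
  define W where "W = Wp M R (Suc (Suc j)) p"
  have D: "0 < D" unfolding D_def by (rule den_pos[OF M a lam cc])
  have W: "0 \<le> W" unfolding W_def using M by (rule Wp_nonneg)
  have "W * (Bf cc a lam (Suc (Suc j)) p)^2 * D \<le> W * (cc^2 / real (Suc (Suc j)) * (\<Sum>i<Suc (Suc j). (u i)^2) / D^2) * D"
    using Bf_sq_bound[OF cc lam less_imp_le[OF a], of j p] W D unfolding u_def D_def
    by (intro mult_right_mono mult_left_mono) auto
  also have "\<dots> = cc^2 / real (Suc (Suc j)) * (\<Sum>i<Suc (Suc j). W * (u i)^2 / D^1)"
  proof -
    define S where "S = (\<Sum>i<Suc (Suc j). (u i)^2)"
    define n where "n = real (Suc (Suc j))"
    have n: "0 < n" unfolding n_def by simp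
    have "W * (cc^2 / n * S / D^2) * D = cc^2 / n * (W * S / D)"
      using D n by (simp add: power2_eq_square field_simps)
    then have "W * (cc^2 / real (Suc (Suc j)) * S / D^2) * D = cc^2 / real (Suc (Suc j)) * (W * S / D)"
      unfolding n_def .
    moreover have "W * S / D = (\<Sum>i<Suc (Suc j). W * (u i)^2 / D^1)"
      unfolding S_def by (simp only: sum_distrib_left sum_divide_distrib power_one_right)
    ultimately show ?thesis unfolding S_def[symmetric] by (simp only:)
  qed
  also have "\<dots> = cc^2 / real (Suc (Suc j)) * (\<Sum>i<Suc (Suc j). FF M R cc a lam 1 (Suc j) (drop_idx i p) (p i))"
    unfolding W_def u_def D_def by (intro arg_cong2[where f="(*)"] refl sum.cong term_eq) auto
  finally show ?thesis unfolding W_def D_def .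
qed

lemma Y_pt:
  shows "Wp M R (Suc (Suc j)) p * (Bf cc a lam (Suc (Suc j)) p)^2
     \<le> cc^2 / real (Suc (Suc j)) * (\<Sum>i<Suc (Suc j). FF M R cc a lam 2 (Suc j) (drop_idx i p) (p i))"
proof -
  define D where "D = lam + a * (norm (sumP (Suc (Suc j)) p))^2"
  define u where "u i = norm (p i) * norm (sumP (Suc j) (drop_idx i p)) * Bf cc a lam (Suc j) (drop_idx i p)" for i
  define W where "W = Wp M R (Suc (Suc j)) p"
  have D: "0 < D" unfolding D_def by (rule den_pos[OF M a lam cc])
  have W: "0 \<le> W" unfolding W_def using M by (rule Wp_nonneg)
  have "W * (Bf cc a lam (Suc (Suc j)) p)^2 \<le> W * (cc^2 / real (Suc (Suc j)) * (\<Sum>i<Suc (Suc j). (u i)^2) / D^2)"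
    using Bf_sq_bound[OF cc lam less_imp_le[OF a], of j p] W D unfolding u_def D_def
    by (intro mult_left_mono) auto
  also have "\<dots> = cc^2 / real (Suc (Suc j)) * (\<Sum>i<Suc (Suc j). W * (u i)^2 / D^2)"
    using D by (simp add: sum_distrib_left sum_divide_distrib field_simps)
  also have "\<dots> = cc^2 / real (Suc (Suc j)) * (\<Sum>i<Suc (Suc j). FF M R cc a lam 2 (Suc j) (drop_idx i p) (p i))"
    unfolding W_def u_def D_def by (intro arg_cong2[where f="(*)"] refl sum.cong term_eq) auto
  finally show ?thesis unfolding W_def D_def .
qed

lemma X_step:
  assumes CK0: "0 \<le> CK"
    and CK: "\<And>s. (\<integral>\<^sup>+y. ennreal (indicator (cball 0 R) (y::real^2) / (lam + a * (norm (y + s))^2)^1) \<partial>lborel) \<le> ennreal CK"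
  shows "Xf (Suc (Suc j)) \<le> ennreal (cc^2 * M * CK / a) * Xf (Suc j)"
proof -
  define n where "n = real (Suc (Suc j))"
  have n: "0 < n" unfolding n_def by simp
  have "Xf (Suc (Suc j)) \<le> (\<integral>\<^sup>+p. ennreal (cc^2 / n) * ennreal (\<Sum>i<Suc (Suc j). FF M R cc a lam 1 (Suc j) (drop_idx i p) (p i)) \<partial>PP (Suc (Suc j)))"
    unfolding Xf_def
  proof (rule nn_integral_mono)
    fix p
    show "ennreal (Wp M R (Suc (Suc j)) p * (Bf cc a lam (Suc (Suc j)) p)^2 * (lam + a * (norm (sumP (Suc (Suc j)) p))^2))
      \<le> ennreal (cc^2 / n) * ennreal (\<Sum>i<Suc (Suc j). FF M R cc a lam 1 (Suc j) (drop_idx i p) (p i))"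
      using X_pt[of j p] n unfolding n_def by (simp add: ennreal_mult'[symmetric] ennreal_leI)
  qed
  also have "\<dots> = ennreal (cc^2 / n) * (\<integral>\<^sup>+p. ennreal (\<Sum>i<Suc (Suc j). FF M R cc a lam 1 (Suc j) (drop_idx i p) (p i)) \<partial>PP (Suc (Suc j)))"
    by (rule nn_integral_cmult) (rule sumFF_meas)
  also have "\<dots> \<le> ennreal (cc^2 / n) * (ennreal (real (Suc (Suc j)) * M * CK) * (\<integral>\<^sup>+q. ennreal (AA M R cc a lam (Suc j) q) \<partial>PP (Suc j)))"
    by (intro mult_left_mono level_int[OF M a lam cc CK0] CK) auto
  also have "\<dots> \<le> ennreal (cc^2 / n) * (ennreal (real (Suc (Suc j)) * M * CK) * (ennreal (1/a) * Xf (Suc j)))"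
    by (intro mult_left_mono AA_le) auto
  also have "\<dots> = ennreal (cc^2 * M * CK / a) * Xf (Suc j)"
  proof -
    have "ennreal (cc^2 / n) * (ennreal (real (Suc (Suc j)) * M * CK) * (ennreal (1/a) * Xf (Suc j)))
       = ennreal (cc^2 / n * (n * M * CK) * (1/a)) * Xf (Suc j)"
      unfolding n_def[symmetric] using M CK0 a n by (intro ennreal_mult3) auto
    also have "cc^2 / n * (n * M * CK) * (1/a) = cc^2 * M * CK / a" using n by (simp add: field_simps)
    finally show ?thesis .
  qed
  finally show ?thesis .
qed

lemma Y_step:
  assumes CK0: "0 \<le> CK"
    and CK: "\<And>s. (\<integral>\<^sup>+y. ennreal (indicator (cball 0 R) (y::real^2) / (lam + a * (norm (y + s))^2)^2) \<partial>lborel) \<le> ennreal CK"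
  shows "Yf (Suc (Suc j)) \<le> ennreal (cc^2 * M * CK / a) * Xf (Suc j)"
proof -
  define n where "n = real (Suc (Suc j))"
  have n: "0 < n" unfolding n_def by simp
  have "Yf (Suc (Suc j)) \<le> (\<integral>\<^sup>+p. ennreal (cc^2 / n) * ennreal (\<Sum>i<Suc (Suc j). FF M R cc a lam 2 (Suc j) (drop_idx i p) (p i)) \<partial>PP (Suc (Suc j)))"
    unfolding Yf_def
  proof (rule nn_integral_mono)
    fix p
    show "ennreal (Wp M R (Suc (Suc j)) p * (Bf cc a lam (Suc (Suc j)) p)^2)
      \<le> ennreal (cc^2 / n) * ennreal (\<Sum>i<Suc (Suc j). FF M R cc a lam 2 (Suc j) (drop_idx i p) (p i))"
      using Y_pt[of j p] n unfolding n_def by (simp add: ennreal_mult'[symmetric] ennreal_leI)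
  qed
  also have "\<dots> = ennreal (cc^2 / n) * (\<integral>\<^sup>+p. ennreal (\<Sum>i<Suc (Suc j). FF M R cc a lam 2 (Suc j) (drop_idx i p) (p i)) \<partial>PP (Suc (Suc j)))"
    by (rule nn_integral_cmult) (rule sumFF_meas)
  also have "\<dots> \<le> ennreal (cc^2 / n) * (ennreal (real (Suc (Suc j)) * M * CK) * (\<integral>\<^sup>+q. ennreal (AA M R cc a lam (Suc j) q) \<partial>PP (Suc j)))"
    by (intro mult_left_mono level_int[OF M a lam cc CK0] CK) auto
  also have "\<dots> \<le> ennreal (cc^2 / n) * (ennreal (real (Suc (Suc j)) * M * CK) * (ennreal (1/a) * Xf (Suc j)))"
    by (intro mult_left_mono AA_le) auto
  also have "\<dots> = ennreal (cc^2 * M * CK / a) * Xf (Suc j)"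
  proof -
    have "ennreal (cc^2 / n) * (ennreal (real (Suc (Suc j)) * M * CK) * (ennreal (1/a) * Xf (Suc j)))
       = ennreal (cc^2 / n * (n * M * CK) * (1/a)) * Xf (Suc j)"
      unfolding n_def[symmetric] using M CK0 a n by (intro ennreal_mult3) auto
    also have "cc^2 / n * (n * M * CK) * (1/a) = cc^2 * M * CK / a" using n by (simp add: field_simps)
    finally show ?thesis .
  qed
  finally show ?thesis .
qed

lemma PP1_int:
  assumes "f \<in> borel_measurable borel"
  shows "(\<integral>\<^sup>+p. f (p 0) \<partial>PP (Suc 0)) = (\<integral>\<^sup>+y. f y \<partial>(lborel :: (real^2) measure))"
proof -
  interpret ps: product_sigma_finite "\<lambda>_::nat. (lborel :: (real^2) measure)" by (rule ps_lborel)
  have "{..<Suc 0} = {0::nat}" by auto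
  then show ?thesis using assms by (simp add: ps.product_nn_integral_singleton)
qed

lemma X_base:
  assumes CK: "\<And>s. (\<integral>\<^sup>+y. ennreal (indicator (cball 0 R) (y::real^2) / (lam + a * (norm (y + s))^2)^1) \<partial>lborel) \<le> ennreal CK"
  shows "Xf (Suc 0) \<le> ennreal (cc^2 * M) * ennreal CK"
proof -
  have m: "(\<lambda>y::real^2. ennreal (ww M R y * (cc * norm y / (lam + a * (norm y)^2))^2 * (lam + a * (norm y)^2))) \<in> borel_measurable borel"
    by measurable
  have "Xf (Suc 0) = (\<integral>\<^sup>+p. ennreal (ww M R (p 0) * (cc * norm (p 0) / (lam + a * (norm (p 0))^2))^2 * (lam + a * (norm (p 0))^2)) \<partial>PP (Suc 0))"
    unfolding Xf_def Wp_def by (intro nn_integral_cong) (simp add: sumP_def)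
  also have "\<dots> = (\<integral>\<^sup>+y. ennreal (ww M R y * (cc * norm y / (lam + a * (norm y)^2))^2 * (lam + a * (norm y)^2)) \<partial>lborel)"
    using PP1_int[OF m] .
  also have "\<dots> \<le> (\<integral>\<^sup>+y. ennreal (cc^2 * M) * ennreal (indicator (cball 0 R) (y::real^2) / (lam + a * (norm (y + 0))^2)^1) \<partial>lborel)"
  proof (rule nn_integral_mono)
    fix y :: "real^2"
    have D: "0 < lam + a * (norm y)^2" by (rule den_pos[OF M a lam cc])
    have "ww M R y * (cc * norm y / (lam + a * (norm y)^2))^2 * (lam + a * (norm y)^2)
        = cc^2 * (ww M R y * (norm y)^2) / (lam + a * (norm y)^2)"
    proof -
      define DD where "DD = lam + a * (norm y)^2"
      have "ww M R y * (cc * norm y / DD)^2 * DD = cc^2 * (ww M R y * (norm y)^2) / DD"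
        using D unfolding DD_def[symmetric] by (simp add: power2_eq_square field_simps)
      then show ?thesis unfolding DD_def .
    qed
    also have "\<dots> \<le> cc^2 * (M * indicator (cball 0 R) y) / (lam + a * (norm y)^2)"
      using D by (intro divide_right_mono mult_left_mono ww_sq M) auto
    finally show "ennreal (ww M R y * (cc * norm y / (lam + a * (norm y)^2))^2 * (lam + a * (norm y)^2))
       \<le> ennreal (cc^2 * M) * ennreal (indicator (cball 0 R) y / (lam + a * (norm (y + 0))^2)^1)"
      using M by (simp add: ennreal_mult'[symmetric] ennreal_leI mult.assoc)
  qed
  also have "\<dots> = ennreal (cc^2 * M) * (\<integral>\<^sup>+y. ennreal (indicator (cball 0 R) (y::real^2) / (lam + a * (norm (y + 0))^2)^1) \<partial>lborel)"
    by (rule nn_integral_cmult) measurable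
  also have "\<dots> \<le> ennreal (cc^2 * M) * ennreal CK"
    by (intro mult_left_mono CK) auto
  finally show ?thesis .
qed

lemma Y_base:
  assumes CK: "\<And>s. (\<integral>\<^sup>+y. ennreal (indicator (cball 0 R) (y::real^2) / (lam + a * (norm (y + s))^2)^2) \<partial>lborel) \<le> ennreal CK"
  shows "Yf (Suc 0) \<le> ennreal (cc^2 * M) * ennreal CK"
proof -
  have m: "(\<lambda>y::real^2. ennreal (ww M R y * (cc * norm y / (lam + a * (norm y)^2))^2)) \<in> borel_measurable borel"
    by measurable
  have "Yf (Suc 0) = (\<integral>\<^sup>+p. ennreal (ww M R (p 0) * (cc * norm (p 0) / (lam + a * (norm (p 0))^2))^2) \<partial>PP (Suc 0))"
    unfolding Yf_def Wp_def by (intro nn_integral_cong) (simp add: sumP_def)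
  also have "\<dots> = (\<integral>\<^sup>+y. ennreal (ww M R y * (cc * norm y / (lam + a * (norm y)^2))^2) \<partial>lborel)"
    using PP1_int[OF m] .
  also have "\<dots> \<le> (\<integral>\<^sup>+y. ennreal (cc^2 * M) * ennreal (indicator (cball 0 R) (y::real^2) / (lam + a * (norm (y + 0))^2)^2) \<partial>lborel)"
  proof (rule nn_integral_mono)
    fix y :: "real^2"
    have D: "0 < lam + a * (norm y)^2" by (rule den_pos[OF M a lam cc])
    have "ww M R y * (cc * norm y / (lam + a * (norm y)^2))^2
        = cc^2 * (ww M R y * (norm y)^2) / (lam + a * (norm y)^2)^2"
    proof -
      define DD where "DD = lam + a * (norm y)^2"
      have "ww M R y * (cc * norm y / DD)^2 = cc^2 * (ww M R y * (norm y)^2) / DD^2"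
        using D unfolding DD_def[symmetric] by (simp add: power2_eq_square field_simps)
      then show ?thesis unfolding DD_def .
    qed
    also have "\<dots> \<le> cc^2 * (M * indicator (cball 0 R) y) / (lam + a * (norm y)^2)^2"
      using D by (intro divide_right_mono mult_left_mono ww_sq M) auto
    finally show "ennreal (ww M R y * (cc * norm y / (lam + a * (norm y)^2))^2)
       \<le> ennreal (cc^2 * M) * ennreal (indicator (cball 0 R) y / (lam + a * (norm (y + 0))^2)^2)"
      using M by (simp add: ennreal_mult'[symmetric] ennreal_leI mult.assoc)
  qed
  also have "\<dots> = ennreal (cc^2 * M) * (\<integral>\<^sup>+y. ennreal (indicator (cball 0 R) (y::real^2) / (lam + a * (norm (y + 0))^2)^2) \<partial>lborel)"
    by (rule nn_integral_cmult) measurable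
  also have "\<dots> \<le> ennreal (cc^2 * M) * ennreal CK"
    by (intro mult_left_mono CK) auto
  finally show ?thesis .
qed

end

lemma D1_nonneg: "0 < lam \<Longrightarrow> 0 < a \<Longrightarrow> 0 \<le> D1 lam a"
  unfolding D1_def using UB_pos by (intro add_nonneg_nonneg divide_nonneg_pos) auto

lemma D2_nonneg: "0 < lam \<Longrightarrow> 0 < a \<Longrightarrow> 0 \<le> D2 lam a"
proof -
  assume "0 < lam" "0 < a"
  have "0 \<le> (\<Sum>k. 1/a^2 * (1/4::real)^k)"
    by (intro suminf_nonneg summable_mult summable_geometric) auto
  then show ?thesis unfolding D2_def using UB_pos by simp
qed

lemma CK1_ok:
  assumes lam: "0 < lam" and a: "0 < a" and R: "2 \<le> R"
  shows "(\<integral>\<^sup>+y. ennreal (indicator (cball 0 R) (y::real^2) / (lam + a * (norm (y + s))^2)^1) \<partial>lborel)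
     \<le> ennreal (D1 lam a * ln R)"
  using intA[OF lam a R, of s] by simp

lemma CK2_ok:
  assumes lam: "0 < lam" and a: "0 < a"
  shows "(\<integral>\<^sup>+y. ennreal (indicator (cball 0 R) (y::real^2) / (lam + a * (norm (y + s))^2)^2) \<partial>lborel)
     \<le> ennreal (D2 lam a)"
proof -
  have "(\<integral>\<^sup>+y. ennreal (indicator (cball 0 R) (y::real^2) / (lam + a * (norm (y + s))^2)^2) \<partial>lborel)
     \<le> (\<integral>\<^sup>+y. ennreal (1 / (lam + a * (norm (y + s))^2)^2) \<partial>lborel)"
    by (intro nn_integral_mono ennreal_leI divide_right_mono) (auto simp: indicator_def)
  also have "\<dots> \<le> ennreal (D2 lam a)" by (rule intB[OF lam a])
  finally show ?thesis .
qed

lemma XY_bounds: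
  assumes M: "0 \<le> M" and a: "0 < a" and lam: "0 < lam" and cc: "0 \<le> cc"
    and L: "0 < L" and lh2: "0 \<le> lh2" and ccL: "cc^2 = lh2 / L"
    and CK1: "0 \<le> CK1" "\<And>s. (\<integral>\<^sup>+y. ennreal (indicator (cball 0 R) (y::real^2) / (lam + a * (norm (y + s))^2)^1) \<partial>lborel) \<le> ennreal (CK1 * L)"
    and CK2: "0 \<le> CK2" "\<And>s. (\<integral>\<^sup>+y. ennreal (indicator (cball 0 R) (y::real^2) / (lam + a * (norm (y + s))^2)^2) \<partial>lborel) \<le> ennreal CK2"
    and E: "lh2 * M * CK1 \<le> E" "lh2 * M * CK1 / a \<le> E" "lh2 * M * CK2 \<le> E" "lh2 * M * CK2 / a \<le> E" "1 \<le> E"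
  shows "Xf M R cc a lam (Suc j) \<le> ennreal (E ^ Suc j) \<and> Yf M R cc a lam (Suc j) \<le> ennreal (E ^ Suc j / L)"
proof (induction j)
  case 0
  have "Xf M R cc a lam (Suc 0) \<le> ennreal (cc^2 * M) * ennreal (CK1 * L)"
    by (rule X_base[OF M a lam cc CK1(2)])
  also have "\<dots> = ennreal (cc^2 * M * (CK1 * L))"
    using M L CK1 by (simp add: ennreal_mult[symmetric])
  also have "cc^2 * M * (CK1 * L) = lh2 * M * CK1" unfolding ccL using L by (simp add: field_simps)
  also have "\<dots> \<le> ennreal (E ^ Suc 0)" using E by (simp add: ennreal_leI)
  finally have X: "Xf M R cc a lam (Suc 0) \<le> ennreal (E ^ Suc 0)" .
  have "Yf M R cc a lam (Suc 0) \<le> ennreal (cc^2 * M) * ennreal CK2"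
    by (rule Y_base[OF M a lam cc CK2(2)])
  also have "\<dots> = ennreal (cc^2 * M * CK2)"
    using M L CK2 by (simp add: ennreal_mult[symmetric])
  also have "cc^2 * M * CK2 = lh2 * M * CK2 / L" unfolding ccL using L by (simp add: field_simps)
  also have "\<dots> \<le> ennreal (E ^ Suc 0 / L)" using E L by (intro ennreal_leI divide_right_mono) auto
  finally show ?case using X by simp
next
  case (Suc j)
  have E0: "0 \<le> E" using E by simp
  have "Xf M R cc a lam (Suc (Suc j)) \<le> ennreal (cc^2 * M * (CK1 * L) / a) * Xf M R cc a lam (Suc j)"
    using CK1 L by (intro X_step[OF M a lam cc]) auto
  also have "\<dots> \<le> ennreal (lh2 * M * CK1 / a) * ennreal (E ^ Suc j)"
  proof (rule mult_mono)
    have eq: "cc^2 * M * (CK1 * L) / a = lh2 * M * CK1 / a" unfolding ccL using L by (simp add: field_simps)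
    show "ennreal (cc^2 * M * (CK1 * L) / a) \<le> ennreal (lh2 * M * CK1 / a)" by (simp only: eq order_refl)
  qed (use Suc.IH in auto)
  also have "\<dots> \<le> ennreal (E * E ^ Suc j)"
  proof -
    have P: "0 \<le> lh2 * M * CK1 / a" using lh2 M CK1 a by simp
    have "lh2 * M * CK1 / a * E ^ Suc j \<le> E * E ^ Suc j" using E(2) E0 by (intro mult_right_mono) auto
    moreover have "ennreal (lh2 * M * CK1 / a) * ennreal (E ^ Suc j) = ennreal (lh2 * M * CK1 / a * E ^ Suc j)"
      using P by (rule ennreal_mult'[symmetric])
    ultimately show ?thesis by (simp only: ennreal_leI)
  qed
  finally have X: "Xf M R cc a lam (Suc (Suc j)) \<le> ennreal (E ^ Suc (Suc j))" by simp
  have "Yf M R cc a lam (Suc (Suc j)) \<le> ennreal (cc^2 * M * CK2 / a) * Xf M R cc a lam (Suc j)"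
    using CK2 by (intro Y_step[OF M a lam cc]) auto
  also have "\<dots> \<le> ennreal (lh2 * M * CK2 / a / L) * ennreal (E ^ Suc j)"
  proof (rule mult_mono)
    have eq: "cc^2 * M * CK2 / a = lh2 * M * CK2 / a / L" unfolding ccL using L by (simp add: field_simps)
    show "ennreal (cc^2 * M * CK2 / a) \<le> ennreal (lh2 * M * CK2 / a / L)" by (simp only: eq order_refl)
  qed (use Suc.IH in auto)
  also have "\<dots> \<le> ennreal (E * E ^ Suc j / L)"
  proof -
    have P: "0 \<le> lh2 * M * CK2 / a / L" using lh2 M CK2 a L by simp
    have "lh2 * M * CK2 / a / L * E ^ Suc j \<le> E / L * E ^ Suc j"
      using E E0 L by (intro mult_right_mono divide_right_mono) auto
    moreover have "E / L * E ^ Suc j = E * E ^ Suc j / L" by simp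
    moreover have "ennreal (lh2 * M * CK2 / a / L) * ennreal (E ^ Suc j) = ennreal (lh2 * M * CK2 / a / L * E ^ Suc j)"
      using P by (rule ennreal_mult'[symmetric])
    ultimately show ?thesis by (simp only: ennreal_leI)
  qed
  finally show ?case using X by simp
qed

lemma weight_le:
  assumes M: "0 \<le> M"
    and MV: "\<And>p. cmod (Vhat rho eps p) \<le> M \<and> (1/eps < norm p \<longrightarrow> Vhat rho eps p = 0)"
  shows "(\<Prod>i<j. Re (Vhat rho eps (p i)) / (norm (p i))^2) \<le> Wp M (1/eps) j p"
proof -
  have "(\<Prod>i<j. Re (Vhat rho eps (p i)) / (norm (p i))^2) \<le> \<bar>\<Prod>i<j. Re (Vhat rho eps (p i)) / (norm (p i))^2\<bar>"
    by simp
  also have "\<dots> = (\<Prod>i<j. \<bar>Re (Vhat rho eps (p i))\<bar> / (norm (p i))^2)"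
    by (simp add: abs_prod abs_divide)
  also have "\<dots> \<le> (\<Prod>i<j. ww M (1/eps) (p i))"
  proof (rule prod_mono)
    fix i
    show "0 \<le> \<bar>Re (Vhat rho eps (p i))\<bar> / (norm (p i))^2 \<and> \<bar>Re (Vhat rho eps (p i))\<bar> / (norm (p i))^2 \<le> ww M (1/eps) (p i)"
    proof (cases "1/eps < norm (p i)")
      case True
      then show ?thesis using MV[of "p i"] M by (simp add: ww_nonneg)
    next
      case False
      have "\<bar>Re (Vhat rho eps (p i))\<bar> \<le> M" using MV[of "p i"] abs_Re_le_cmod order_trans by blast
      then have "\<bar>Re (Vhat rho eps (p i))\<bar> / (norm (p i))^2 \<le> M / (norm (p i))^2"
        by (rule divide_right_mono) simp
      then show ?thesis using False unfolding ww_def by (simp add: indicator_def)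
    qed
  qed
  finally show ?thesis unfolding Wp_def .
qed

theorem proposition4p4:
  fixes rho :: "real^2 \<Rightarrow> real" and lhat nu lam :: real
  assumes "lhat > 0" and "nu > 0" and "lam > 0"
    and "schwartz rho" and "radial rho"
    and "integral\<^sup>L lborel rho = 1"
    and "\<forall>p. norm p > 1 \<longrightarrow> ft rho p = 0"
  shows "\<forall>n::nat. \<exists>C>0. \<forall>eps::real. 0 < eps \<and> eps < 1/2 \<longrightarrow>
           (\<forall>j\<in>{1..n}. \<forall>c\<in>{1,2::nat}.
              gnorm_sq rho eps j (bfun lhat nu lam eps n j c)
                \<le> ennreal ((C ^ j / sqrt (lam * ln (1 / eps)))\<^sup>2)
            \<and> gnorm_sq rho eps j (sqrtL0 nu j (bfun lhat nu lam eps n j c))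
                \<le> ennreal ((C ^ j)\<^sup>2))"
proof
  fix n :: nat
  have lhat: "0 < lhat" and nu: "0 < nu" and lam: "0 < lam" using assms by auto
  obtain M where M: "0 \<le> M" and MV: "\<And>eps p. eps > 0 \<Longrightarrow> cmod (Vhat rho eps p) \<le> M \<and> (1/eps < norm p \<longrightarrow> Vhat rho eps p = 0)"
    using Vhat_props[OF assms(4) assms(7)] by blast
  define a where "a = nu^2/2"
  have a: "0 < a" unfolding a_def using nu by simp
  define CK1 where "CK1 = D1 lam a"
  define CK2 where "CK2 = D2 lam a"
  have CK1: "0 \<le> CK1" unfolding CK1_def using lam a by (rule D1_nonneg)
  have CK2: "0 \<le> CK2" unfolding CK2_def using lam a by (rule D2_nonneg)
  define lh2 where "lh2 = lhat^2"
  have lh2: "0 \<le> lh2" unfolding lh2_def by simp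
  define E where "E = max 1 (max (lh2*M*CK1) (max (lh2*M*CK1/a) (max (lh2*M*CK2) (lh2*M*CK2/a))))"
  have E: "lh2 * M * CK1 \<le> E" "lh2 * M * CK1 / a \<le> E" "lh2 * M * CK2 \<le> E" "lh2 * M * CK2 / a \<le> E" "1 \<le> E"
    unfolding E_def by auto
  define A where "A = max 1 lam"
  define F where "F = (fact n :: real)"
  have A: "1 \<le> A" "lam \<le> A" unfolding A_def by auto
  have F: "1 \<le> F" unfolding F_def by simp
  define C where "C = sqrt (A * F * E)"
  have AFE: "1 \<le> A * F * E"
  proof -
    have "1 * 1 * 1 \<le> A * F * E" using A F E(5) by (intro mult_mono) auto
    then show ?thesis by simp
  qed
  have C2: "C^2 = A * F * E" unfolding C_def using AFE by simp
  have C0: "0 < C" unfolding C_def using AFE by simp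
  show "\<exists>C>0. \<forall>eps::real. 0 < eps \<and> eps < 1/2 \<longrightarrow>
           (\<forall>j\<in>{1..n}. \<forall>c\<in>{1,2::nat}.
              gnorm_sq rho eps j (bfun lhat nu lam eps n j c)
                \<le> ennreal ((C ^ j / sqrt (lam * ln (1 / eps)))\<^sup>2)
            \<and> gnorm_sq rho eps j (sqrtL0 nu j (bfun lhat nu lam eps n j c))
                \<le> ennreal ((C ^ j)\<^sup>2))"
  proof (intro exI[of _ C] conjI allI impI ballI)
    show "0 < C" by (rule C0)
    fix eps :: real and j c
    assume eps: "0 < eps \<and> eps < 1/2" and j: "j \<in> {1..n}" and c: "c \<in> {1, 2::nat}"
    define R where "R = 1/eps"
    define L where "L = ln (1/eps)"
    have R: "2 \<le> R" unfolding R_def using eps by (simp add: field_simps)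
    have L: "0 < L" unfolding L_def using eps by (simp add: field_simps)
    have LR: "ln R = L" unfolding R_def L_def ..
    define cc where "cc = lhat / sqrt L"
    have cc: "0 \<le> cc" unfolding cc_def using lhat L by simp
    have ccL: "cc^2 = lh2 / L" unfolding cc_def lh2_def using L by (simp add: power_divide)
    have XY: "Xf M R cc a lam (Suc k) \<le> ennreal (E ^ Suc k) \<and> Yf M R cc a lam (Suc k) \<le> ennreal (E ^ Suc k / L)" for k
    proof (rule XY_bounds[OF M a lam cc L lh2 ccL CK1 _ CK2 _ E])
      show "(\<integral>\<^sup>+y. ennreal (indicator (cball 0 R) (y::real^2) / (lam + a * (norm (y + s))^2)^1) \<partial>lborel) \<le> ennreal (CK1 * L)" for s
        using CK1_ok[OF lam a R, of s] unfolding CK1_def LR .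
      show "(\<integral>\<^sup>+y. ennreal (indicator (cball 0 R) (y::real^2) / (lam + a * (norm (y + s))^2)^2) \<partial>lborel) \<le> ennreal CK2" for s
        unfolding CK2_def by (rule CK2_ok[OF lam a])
    qed
    obtain k where k: "j = Suc k" using j by (cases j) auto
    have jn: "j \<le> n" using j by simp
    define b where "b = bfun lhat nu lam eps n j c"
    have bB: "cmod (b p) \<le> Bf cc a lam j p" for p
      unfolding b_def a_def using bfun_le_Bf[OF lam cc_def[unfolded L_def] cc] j by simp
    have B0: "0 \<le> Bf cc a lam j p" for p using cc lam a by (intro Bf_nonneg) auto
    have W: "(\<Prod>i<j. Re (Vhat rho eps (p i)) / (norm (p i))^2) \<le> Wp M R j p" for p
      unfolding R_def using M MV eps by (intro weight_le) auto
    have W0: "0 \<le> Wp M R j p" for p using M by (rule Wp_nonneg)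
    have real1: "fact j * E ^ j / L \<le> (C ^ j / sqrt (lam * L))^2"
    proof -
      have "lam * fact j * E ^ j \<le> A * F * E ^ j"
        using A F jn E(5) lam unfolding F_def
        by (intro mult_mono fact_mono) auto
      also have "\<dots> \<le> A ^ j * F ^ j * E ^ j"
        using A F k E(5) by (intro mult_mono power_increasing[of 1 j, simplified]) auto
      also have "\<dots> = (C^2)^j" unfolding C2 by (simp add: power_mult_distrib)
      finally have "lam * fact j * E ^ j \<le> (C^2)^j" .
      then have "fact j * E ^ j / L \<le> (C^2)^j / (lam * L)"
        using lam L by (simp add: field_simps)
      also have "\<dots> = (C ^ j / sqrt (lam * L))^2"
        using lam L by (simp add: power_divide power_mult[symmetric] mult.commute)
      finally show ?thesis .
    qed
    have real2: "fact j * E ^ j \<le> (C ^ j)^2"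
    proof -
      have fj: "(fact j::real) \<le> F" unfolding F_def using jn by (rule fact_mono)
      have "1 * F \<le> A * F" using A F by (intro mult_right_mono) auto
      then have "fact j \<le> A * F" using fj by simp
      then have "fact j * E ^ j \<le> A * F * E ^ j" using E(5) by (intro mult_right_mono) auto
      also have "\<dots> \<le> A ^ j * F ^ j * E ^ j"
        using A F k E(5) by (intro mult_mono power_increasing[of 1 j, simplified]) auto
      also have "\<dots> = (C ^ j)^2" unfolding power_mult[symmetric] mult.commute[of j 2] power_mult C2
        by (simp add: power_mult_distrib)
      finally show ?thesis .
    qed
    show "gnorm_sq rho eps j (bfun lhat nu lam eps n j c) \<le> ennreal ((C ^ j / sqrt (lam * ln (1 / eps)))\<^sup>2)"
    proof -
      have "gnorm_sq rho eps j b \<le> ennreal (fact j) * Yf M R cc a lam j"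
        unfolding gnorm_sq_def Yf_def[OF M a lam cc]
      proof (rule mult_left_mono[OF nn_integral_mono])
        fix p
        have "cmod (b p)^2 \<le> (Bf cc a lam j p)^2" using bB[of p] by (intro power_mono) auto
        then have "ennreal (\<Prod>i<j. Re (Vhat rho eps (p i)) / (norm (p i))^2) * ennreal ((cmod (b p))^2)
            \<le> ennreal (Wp M R j p) * ennreal ((Bf cc a lam j p)^2)"
          using W[of p] by (intro mult_mono ennreal_leI) auto
        also have "\<dots> = ennreal (Wp M R j p * (Bf cc a lam j p)^2)"
          using W0 by (rule ennreal_mult'[symmetric])
        finally show "ennreal (\<Prod>i<j. Re (Vhat rho eps (p i)) / (norm (p i))^2) * ennreal ((cmod (b p))^2)
            \<le> ennreal (Wp M R j p * (Bf cc a lam j p)^2)" .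
      qed auto
      also have "\<dots> \<le> ennreal (fact j) * ennreal (E ^ j / L)"
        using XY[of k] unfolding k by (intro mult_left_mono) auto
      also have "\<dots> = ennreal (fact j * E ^ j / L)"
        by (simp add: ennreal_mult'[symmetric])
      also have "\<dots> \<le> ennreal ((C ^ j / sqrt (lam * ln (1 / eps)))\<^sup>2)"
        using real1 unfolding L_def by (rule ennreal_leI)
      finally show ?thesis unfolding b_def .
    qed
    show "gnorm_sq rho eps j (sqrtL0 nu j (bfun lhat nu lam eps n j c)) \<le> ennreal ((C ^ j)\<^sup>2)"
    proof -
      have "gnorm_sq rho eps j (sqrtL0 nu j b) \<le> ennreal (fact j) * Xf M R cc a lam j"
        unfolding gnorm_sq_def Xf_def[OF M a lam cc]
      proof (rule mult_left_mono[OF nn_integral_mono])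
        fix p
        have "(cmod (sqrtL0 nu j b p))^2 = a * (norm (sumP j p))^2 * (cmod (b p))^2"
          unfolding sqrtL0_def a_def by (simp add: norm_mult power_mult_distrib)
        also have "\<dots> \<le> (lam + a * (norm (sumP j p))^2) * (Bf cc a lam j p)^2"
          using bB[of p] a lam by (intro mult_mono power_mono) auto
        finally have "(cmod (sqrtL0 nu j b p))^2 \<le> (Bf cc a lam j p)^2 * (lam + a * (norm (sumP j p))^2)"
          by (simp add: mult.commute)
        then have "ennreal (\<Prod>i<j. Re (Vhat rho eps (p i)) / (norm (p i))^2) * ennreal ((cmod (sqrtL0 nu j b p))^2)
            \<le> ennreal (Wp M R j p) * ennreal ((Bf cc a lam j p)^2 * (lam + a * (norm (sumP j p))^2))"
          using W[of p] by (intro mult_mono ennreal_leI) auto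
        also have "\<dots> = ennreal (Wp M R j p * (Bf cc a lam j p)^2 * (lam + a * (norm (sumP j p))^2))"
          using W0 by (simp add: ennreal_mult'[symmetric] mult.assoc)
        finally show "ennreal (\<Prod>i<j. Re (Vhat rho eps (p i)) / (norm (p i))^2) * ennreal ((cmod (sqrtL0 nu j b p))^2)
            \<le> ennreal (Wp M R j p * (Bf cc a lam j p)^2 * (lam + a * (norm (sumP j p))^2))" .
      qed auto
      also have "\<dots> \<le> ennreal (fact j) * ennreal (E ^ j)"
        using XY[of k] unfolding k by (intro mult_left_mono) auto
      also have "\<dots> = ennreal (fact j * E ^ j)"
        by (simp add: ennreal_mult'[symmetric])
      also have "\<dots> \<le> ennreal ((C ^ j)\<^sup>2)"
        using real2 by (rule ennreal_leI)
      finally show ?thesis unfolding b_def .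
    qed
  qed
qed

end
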